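(* Consider an affine resource theory, with free sets $\mathcal F$ on the input space and $\mathcal F'$ on the output space. For states $\rho$ (input) and $\rho'$ (output), there exists a resource--non-generating probabilistic transformation $\rho\to\rho'$ (in the sense defined below) if any of the following holds: (i) $\infty>\Omega_{\mathcal F}(\rho)\ge\Omega_{\mathcal F'}(\rho')$; (ii) $\Omega_{\mathcal F}(\rho)=\infty$ and $R_{\mathcal F'}(\rho')<\infty$; (iii) $R_{\mathcal F}(\rho)=\infty$.
   Context: Finite dimensions; $A\le B$ means $B-A\ge0$; $\langle A,B\rangle=\mathrm{Tr}(AB)$. Each space carries a closed convex set of free states $\mathcal F$ (density operators). The theory is affine: on each space $\mathcal F=\mathrm{aff}(\mathcal F)\cap\mathcal D$, where $\mathcal D$ is the set of density operators and $\mathrm{aff}$ is the affine hull. $R_{\max}(X\|Y)=\inf\{\lambda:X\le\lambda Y\}$ (with $\inf\emptyset=\infty$); $R_{\mathcal F}(\rho)=\min_{\sigma\in\mathcal F}R_{\max}(\rho\|\sigma)$; $\Omega_{\mathcal F}(\rho)=\inf_{\sigma\in\mathcal F}R_{\max}(\rho\|\sigma)R_{\max}(\sigma\|\rho)$. $\mathbb O$ is the set of completely positive trace-non-increasing maps $\mathcal E$ from input to output operators such that for every $\sigma\in\mathcal F$ there exist $\sigma'\in\mathcal F'$ and $p\in[0,1]$ with $\mathcal E(\sigma)=p\sigma'$. A probabilistic transformation $\rho\to\rho'$ exists iff $\rho'$ lies in the closure of $\{\mathcal E(\rho)/\mathrm{Tr}\,\mathcal E(\rho):\ \mathcal E\in\mathbb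 O,\ \mathrm{Tr}\,\mathcal E(\rho)>0\}$. *)

theory Defs
  imports "HOL-Analysis.Analysis"
begin

text \<open>Operators on a finite-dimensional Hilbert space with orthonormal basis indexed by
  the finite type 'n are complex matrices of type complex^'n^'n.\<close>

definition cinner :: "complex^'n \<Rightarrow> complex^'n \<Rightarrow> complex" where
  "cinner x y = (\<Sum>i\<in>UNIV. cnj (x$i) * y$i)"

definition psd :: "complex^'n^'n \<Rightarrow> bool" where
  "psd A \<longleftrightarrow> (\<forall>x. Im (cinner x (A *v x)) = 0 \<and> Re (cinner x (A *v x)) \<ge> 0)"

definition loewner_le :: "complex^'n^'n \<Rightarrow> complex^'n^'n \<Rightarrow> bool" where
  "loewner_le A B \<longleftrightarrow> psd (B - A)"

definition density_ops :: "(complex^'n^'n) set" where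
  "density_ops = {\<rho>. psd \<rho> \<and> trace \<rho> = 1}"

definition cscale :: "complex \<Rightarrow> complex^'n^'n \<Rightarrow> complex^'n^'n" where
  "cscale c A = (\<chi> i j. c * A$i$j)"

text \<open>R_max(X||Y) = inf {lambda. X \<le> lambda Y}, with inf of the empty set = \<infinity>.\<close>
definition Rmax :: "complex^'n^'n \<Rightarrow> complex^'n^'n \<Rightarrow> ereal" where
  "Rmax X Y = Inf {ereal l | l. loewner_le X (l *\<^sub>R Y)}"

definition RF :: "(complex^'n^'n) set \<Rightarrow> complex^'n^'n \<Rightarrow> ereal" where
  "RF F \<rho> = (INF \<sigma>\<in>F. Rmax \<rho> \<sigma>)"

definition OmegaF :: "(complex^'n^'n) set \<Rightarrow> complex^'n^'n \<Rightarrow> ereal" where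
  "OmegaF F \<rho> = (INF \<sigma>\<in>F. Rmax \<rho> \<sigma> * Rmax \<sigma> \<rho>)"

definition affine_free_set :: "(complex^'n^'n) set \<Rightarrow> bool" where
  "affine_free_set F \<longleftrightarrow> F \<noteq> {} \<and> closed F \<and> convex F \<and> F \<subseteq> density_ops
     \<and> F = affine hull F \<inter> density_ops"

definition clinear_map :: "(complex^'a^'a \<Rightarrow> complex^'b^'b) \<Rightarrow> bool" where
  "clinear_map E \<longleftrightarrow> (\<forall>A B. E (A + B) = E A + E B) \<and> (\<forall>c A. E (cscale c A) = cscale c (E A))"

text \<open>Positivity of a k x k block matrix with blocks M a b (a, b < k), i.e. of an operator
  on C^k \<otimes> H.\<close>
definition block_psd :: "nat \<Rightarrow> (nat \<Rightarrow> nat \<Rightarrow> complex^'n^'n) \<Rightarrow> bool" where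
  "block_psd k M \<longleftrightarrow> (\<forall>v :: nat \<Rightarrow> complex^'n.
      let q = (\<Sum>a<k. \<Sum>b<k. cinner (v a) (M a b *v v b)) in Im q = 0 \<and> Re q \<ge> 0)"

text \<open>Complete positivity: id_k \<otimes> E is positive for every k (id_k \<otimes> E acts blockwise).\<close>
definition completely_positive :: "(complex^'a^'a \<Rightarrow> complex^'b^'b) \<Rightarrow> bool" where
  "completely_positive E \<longleftrightarrow> clinear_map E \<and>
     (\<forall>k M. block_psd k M \<longrightarrow> block_psd k (\<lambda>a b. E (M a b)))"

definition trace_nonincreasing :: "(complex^'a^'a \<Rightarrow> complex^'b^'b) \<Rightarrow> bool" where
  "trace_nonincreasing E \<longleftrightarrow> (\<forall>X. psd X \<longrightarrow> Re (trace (E X)) \<le> Re (trace X))"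

definition free_ops :: "(complex^'a^'a) set \<Rightarrow> (complex^'b^'b) set
     \<Rightarrow> (complex^'a^'a \<Rightarrow> complex^'b^'b) set" where
  "free_ops F F' = {E. completely_positive E \<and> trace_nonincreasing E \<and>
      (\<forall>\<sigma>\<in>F. \<exists>\<sigma>'\<in>F'. \<exists>p::real. 0 \<le> p \<and> p \<le> 1 \<and> E \<sigma> = p *\<^sub>R \<sigma>')}"

definition prob_transformable :: "(complex^'a^'a) set \<Rightarrow> (complex^'b^'b) set
     \<Rightarrow> complex^'a^'a \<Rightarrow> complex^'b^'b \<Rightarrow> bool" where
  "prob_transformable F F' \<rho> \<rho>' \<longleftrightarrow>
     \<rho>' \<in> closure {(1 / Re (trace (E \<rho>))) *\<^sub>R E \<rho> | E. E \<in> free_ops F F' \<and> Re (trace (E \<rho>)) > 0}"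

end

theory Submission
  imports Defs
begin


definition qf :: "complex^'n^'n \<Rightarrow> complex^'n \<Rightarrow> complex" where
  "qf M x = cinner x (M *v x)"

definition outer :: "complex^'n \<Rightarrow> complex^'n^'n" where
  "outer t = (\<chi> i j. t$i * cnj (t$j))"

definition herm :: "complex^'n^'n \<Rightarrow> bool" where
  "herm M \<longleftrightarrow> (\<forall>i j. M$i$j = cnj (M$j$i))"

lemma cinner_add_right: "cinner x (y + z) = cinner x y + cinner x z"
  by (simp add: cinner_def sum.distrib algebra_simps)
lemma cinner_add_left: "cinner (x + y) z = cinner x z + cinner y z"
  by (simp add: cinner_def sum.distrib algebra_simps)
lemma cinner_diff_right: "cinner x (y - z) = cinner x y - cinner x z"
  by (simp add: cinner_def sum_subtractf algebra_simps)
lemma cinner_diff_left: "cinner (x - y) z = cinner x z - cinner y z"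
  by (simp add: cinner_def sum_subtractf algebra_simps)
lemma cinner_smult_right: "cinner x (c *s y) = c * cinner x y"
  by (simp add: cinner_def sum_distrib_left algebra_simps)
lemma cinner_smult_left: "cinner (c *s x) y = cnj c * cinner x y"
  by (simp add: cinner_def sum_distrib_left algebra_simps)
lemma cinner_zero_left[simp]: "cinner 0 y = 0" by (simp add: cinner_def)
lemma cinner_zero_right[simp]: "cinner x 0 = 0" by (simp add: cinner_def)
lemma cinner_commute: "cinner y x = cnj (cinner x y)"
  by (simp add: cinner_def mult.commute)

lemma cinner_self: "cinner x x = of_real (\<Sum>i\<in>UNIV. (cmod (x$i))^2)"
  unfolding cinner_def of_real_sum
  by (intro sum.cong refl) (metis complex_norm_square mult.commute)

lemma cinner_self_Re: "Re (cinner x x) = (norm x)^2"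
  by (simp add: cinner_self norm_vec_def L2_set_def sum_nonneg)

lemma cinner_self_Im[simp]: "Im (cinner x x) = 0"
  by (simp add: cinner_self)

lemma cinner_self_eq0: "cinner x x = 0 \<longleftrightarrow> x = 0"
proof
  assume "cinner x x = 0"
  then have "Re (cinner x x) = 0" by simp
  then show "x = 0" by (simp add: cinner_self_Re)
qed simp

lemma cinner_axis_left: "cinner (axis i 1) y = y $ i"
  unfolding cinner_def axis_def by (simp add: if_distrib[of cnj] if_distrib[of "\<lambda>z. z * _"] cong: if_cong)

lemma cinner_axis_right: "cinner x (axis i 1) = cnj (x $ i)"
  unfolding cinner_def axis_def by (simp add: if_distrib[of "\<lambda>z. _ * z"] cong: if_cong)

lemma mv_axis: "((M::complex^'n^'n) *v axis j 1) $ i = M$i$j"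
  by (simp add: matrix_vector_mult_def axis_def if_distrib cong: if_cong)

lemma mv_add: "((M::complex^'n^'n) + N) *v x = M *v x + N *v x"
  by (simp add: matrix_vector_mult_def vec_eq_iff sum.distrib algebra_simps)
lemma mv_diff: "((M::complex^'n^'n) - N) *v x = M *v x - N *v x"
  by (auto simp: vec_eq_iff matrix_vector_mult_def sum_subtractf[symmetric] left_diff_distrib)
lemma mscaleR_entry: "((c::real) *\<^sub>R (M::complex^'n^'n))$i$j = of_real c * M$i$j"
  by (simp only: vector_scaleR_component scaleR_conv_of_real[where 'a=complex])
lemma mv_scaleR: "(c *\<^sub>R M) *v x = c *\<^sub>R ((M::complex^'n^'n) *v x)"
  unfolding matrix_vector_mult_def vec_eq_iff mscaleR_entry vector_scaleR_component vec_lambda_beta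
  by (simp add: sum_distrib_left scaleR_conv_of_real[where 'a=complex] mult.assoc)
lemma mv_smult: "(M::complex^'n^'n) *v (c *s x) = c *s (M *v x)"
  unfolding matrix_vector_mult_def vec_eq_iff
  by (auto simp add: sum_distrib_left mult.left_commute intro!: sum.cong)
lemma mv_vadd: "(M::complex^'n^'n) *v (x + y) = M *v x + M *v y"
  by (simp add: matrix_vector_mult_def vec_eq_iff sum.distrib algebra_simps)
lemma mv_cscale: "(cscale c M) *v x = c *s ((M::complex^'n^'n) *v x)"
  by (simp add: cscale_def matrix_vector_mult_def vec_eq_iff sum_distrib_left algebra_simps)
lemma mv_zero[simp]: "(0::complex^'n^'n) *v x = 0"
  by (simp add: matrix_vector_mult_def vec_eq_iff)
lemma mv_sum: "(\<Sum>k\<in>K. (M k::complex^'n^'n)) *v x = (\<Sum>k\<in>K. M k *v x)"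
  by (induction K rule: infinite_finite_induct) (auto simp: mv_add)

lemma scaleR_smult: "(c::real) *\<^sub>R (x::complex^'n) = (complex_of_real c) *s x"
  by (simp add: vec_eq_iff) (simp add: scaleR_conv_of_real)

lemma cinner_scaleR_right: "cinner x ((c::real) *\<^sub>R y) = of_real c * cinner x y"
  by (simp add: scaleR_smult cinner_smult_right)
lemma cinner_scaleR_left: "cinner ((c::real) *\<^sub>R x) y = of_real c * cinner x y"
  by (simp add: scaleR_smult cinner_smult_left)

lemma cinner_sum_right: "cinner x (\<Sum>k\<in>K. f k) = (\<Sum>k\<in>K. cinner x (f k))"
  by (induction K rule: infinite_finite_induct) (auto simp: cinner_add_right)
lemma cinner_sum_left: "cinner (\<Sum>k\<in>K. f k) y = (\<Sum>k\<in>K. cinner (f k) y)"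
  by (induction K rule: infinite_finite_induct) (auto simp: cinner_add_left)

lemma outer_mv: "outer t *v y = cinner t y *s t"
  by (simp add: outer_def matrix_vector_mult_def vec_eq_iff cinner_def sum_distrib_left algebra_simps)

lemma herm_form: assumes h: "herm M" shows "cinner x (M *v y) = cnj (cinner y (M *v x))"
proof -
  have "cinner x (M *v y) = (\<Sum>i\<in>UNIV. \<Sum>j\<in>UNIV. cnj (x$i) * M$i$j * y$j)"
    unfolding cinner_def matrix_vector_mult_def by (simp add: sum_distrib_left mult.assoc)
  also have "\<dots> = (\<Sum>j\<in>UNIV. \<Sum>i\<in>UNIV. cnj (x$i) * M$i$j * y$j)" by (rule sum.swap)
  also have "\<dots> = (\<Sum>j\<in>UNIV. \<Sum>i\<in>UNIV. cnj (cnj (y$j) * M$j$i * x$i))"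
  proof (intro sum.cong refl)
    fix i j
    have "M$i$j = cnj (M$j$i)" using h unfolding herm_def by blast
    then have hij: "cnj (M$j$i) = M$i$j" by (rule sym)
    show "cnj (x$i) * M$i$j * y$j = cnj (cnj (y$j) * M$j$i * x$i)" by (simp add: hij mult_ac)
  qed
  also have "\<dots> = cnj (cinner y (M *v x))"
    unfolding cinner_def matrix_vector_mult_def by (simp add: sum_distrib_left mult.assoc)
  finally show ?thesis .
qed

lemma qf_real: "herm M \<Longrightarrow> Im (qf M x) = 0"
proof -
  assume h: "herm M"
  have "qf M x = cnj (qf M x)" unfolding qf_def using herm_form[OF h, of x x] .
  then show ?thesis by (simp add: complex_eq_iff)
qed

lemma psd_qf: "psd M \<longleftrightarrow> (\<forall>x. Im (qf M x) = 0 \<and> Re (qf M x) \<ge> 0)"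
  by (simp add: psd_def qf_def)

lemma form_expand:
  "cinner (x + t *s y) (M *v (x + t *s y)) =
     cinner x (M *v x) + t * cinner x (M *v y) + cnj t * cinner y (M *v x) + cnj t * t * cinner y (M *v y)"
  by (simp add: mv_vadd mv_smult cinner_add_left cinner_add_right cinner_smult_left cinner_smult_right algebra_simps)

lemma psd_herm: assumes "psd M" shows "herm M"
proof -
  have real: "Im (cinner z (M *v z)) = 0" for z using assms by (simp add: psd_def)
  have key: "cinner x (M *v y) = cnj (cinner y (M *v x))" for x y
  proof -
    define u where "u = cinner x (M *v y)"
    define w where "w = cinner y (M *v x)"
    have r1: "Im (cinner x (M *v x) + 1 * u + cnj 1 * w + cnj 1 * 1 * cinner y (M *v y)) = 0"
      using real[of "x + 1 *s y"] unfolding form_expand u_def w_def .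
    have r2: "Im (cinner x (M *v x) + \<i> * u + cnj \<i> * w + cnj \<i> * \<i> * cinner y (M *v y)) = 0"
      using real[of "x + \<i> *s y"] unfolding form_expand u_def w_def .
    have e1: "Im (u + w) = 0" using r1 real[of x] real[of y] by simp
    have e2: "Re u - Re w = 0" using r2 real[of x] real[of y] by simp
    from e1 e2 have "u = cnj w" by (simp add: complex_eq_iff)
    then show ?thesis by (simp add: u_def w_def)
  qed
  show ?thesis unfolding herm_def
  proof (intro allI)
    fix i j
    have "M$i$j = cinner (axis i 1) (M *v axis j 1)" by (simp add: cinner_axis_left mv_axis)
    also have "\<dots> = cnj (cinner (axis j 1) (M *v axis i 1))" by (rule key)
    also have "\<dots> = cnj (M$j$i)" by (simp add: cinner_axis_left mv_axis)
    finally show "M$i$j = cnj (M$j$i)" .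
  qed
qed

lemma psd_iff: "psd M \<longleftrightarrow> herm M \<and> (\<forall>x. Re (qf M x) \<ge> 0)"
  using psd_herm qf_real psd_qf by blast

lemma herm_iff: "herm M \<longleftrightarrow> (\<forall>i j. cnj (M$j$i) = M$i$j)"
  unfolding herm_def by (metis complex_cnj_cnj)
lemma herm_add: "herm A \<Longrightarrow> herm B \<Longrightarrow> herm (A + B)" by (simp add: herm_iff)
lemma herm_diff: "herm A \<Longrightarrow> herm B \<Longrightarrow> herm (A - B)" by (simp add: herm_iff)
lemma herm_scaleR: "herm A \<Longrightarrow> herm (c *\<^sub>R A)" by (simp add: herm_iff mscaleR_entry)
lemma herm_zero: "herm 0" by (simp add: herm_iff)
lemma herm_uminus: "herm A \<Longrightarrow> herm (- A)" by (simp add: herm_iff)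
lemma herm_outer: "herm (outer t)" by (simp add: herm_iff outer_def mult.commute)
lemma herm_mat1: "herm (mat 1 :: complex^'n^'n)" by (simp add: herm_iff mat_def)

lemma qf_add: "qf (A + B) x = qf A x + qf B x" by (simp add: qf_def mv_add cinner_add_right)
lemma qf_diff: "qf (A - B) x = qf A x - qf B x" by (simp add: qf_def mv_diff cinner_diff_right)
lemma qf_scaleR: "qf (c *\<^sub>R A) x = of_real c * qf A x" by (simp add: qf_def mv_scaleR cinner_scaleR_right)
lemma qf_outer: "qf (outer t) x = of_real ((cmod (cinner t x))^2)"
proof -
  have "qf (outer t) x = cinner t x * cinner x t" by (simp add: qf_def outer_mv cinner_smult_right)
  also have "cinner x t = cnj (cinner t x)" by (rule cinner_commute)
  finally show ?thesis by (simp add: complex_norm_square[symmetric])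
qed
lemma qf_mat1: "qf (mat 1) x = cinner x x" by (simp add: qf_def)

lemma psd_add: "psd A \<Longrightarrow> psd B \<Longrightarrow> psd (A + B)" by (simp add: psd_qf qf_add)
lemma psd_scaleR: "psd A \<Longrightarrow> c \<ge> 0 \<Longrightarrow> psd (c *\<^sub>R A)" by (simp add: psd_qf qf_scaleR)
lemma psd_zero: "psd 0" by (simp add: psd_def)
lemma psd_outer: "psd (outer t)" by (simp add: psd_qf qf_outer)
lemma psd_mat1: "psd (mat 1 :: complex^'n^'n)" by (simp add: psd_qf qf_mat1 cinner_self_Re)



lemma qf_of_real: "herm M \<Longrightarrow> qf M x = of_real (Re (qf M x))"
  using qf_real[of M x] by (simp add: complex_eq_iff)

lemma psd_CS:
  assumes p: "psd M"
  shows "(cmod (cinner x (M *v y)))^2 \<le> Re (qf M x) * Re (qf M y)"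
proof -
  have h: "herm M" using p psd_herm by blast
  define u where "u = cinner x (M *v y)"
  define a where "a = Re (qf M x)"
  define c where "c = Re (qf M y)"
  define n where "n = (cmod u)^2"
  have a0: "a \<ge> 0" and c0: "c \<ge> 0" using p by (auto simp: psd_qf a_def c_def)
  have n0: "n \<ge> 0" by (simp add: n_def)
  have qx: "cinner x (M *v x) = of_real a" using qf_of_real[OF h, of x] by (simp add: a_def qf_def)
  have qy: "cinner y (M *v y) = of_real c" using qf_of_real[OF h, of y] by (simp add: c_def qf_def)
  have qyx: "cinner y (M *v x) = cnj u" using herm_form[OF h, of y x] by (simp add: u_def)
  have hu: "cnj u * u = of_real n" unfolding n_def by (metis complex_norm_square mult.commute)
  have hu2: "u * cnj u = of_real n" using hu by (simp add: mult.commute)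
  have key: "a - 2 * s * n + s^2 * n * c \<ge> 0" for s :: real
  proof -
    define t where "t = - (of_real s * cnj u)"
    have ge: "Re (qf M (x + t *s y)) \<ge> 0" using p by (simp add: psd_qf)
    have e0: "qf M (x + t *s y) = of_real a + t * u + cnj t * cnj u + cnj t * t * of_real c"
      unfolding qf_def form_expand qx qy qyx u_def ..
    have e1: "t * u = - of_real (s * n)" by (simp add: t_def hu mult.assoc)
    have e2: "cnj t * cnj u = - of_real (s * n)" by (simp add: t_def hu2 mult.assoc)
    have e3: "cnj t * t = of_real (s^2 * n)"
    proof -
      have "cnj t * t = of_real s * of_real s * (u * cnj u)" by (simp add: t_def mult_ac)
      then show ?thesis by (simp add: hu2 power2_eq_square)
    qed
    have "qf M (x + t *s y) = of_real a + - of_real (s * n) + - of_real (s * n) + of_real (s^2 * n) * of_real c"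
      using e0 unfolding e1 e2 e3 .
    then have "Re (qf M (x + t *s y)) = a - 2 * s * n + s^2 * n * c" by simp
    then show ?thesis using ge by simp
  qed
  show ?thesis
  proof (cases "c > 0")
    case True
    have "a - 2 * (1/c) * n + (1/c)^2 * n * c \<ge> 0" by (rule key)
    then have "a - n / c \<ge> 0" using True by (simp add: power2_eq_square field_simps)
    then have "n \<le> a * c" using True by (simp add: field_simps)
    then show ?thesis by (simp add: n_def u_def a_def c_def)
  next
    case False
    then have c: "c = 0" using c0 by simp
    have "n = 0"
    proof (rule ccontr)
      assume "n \<noteq> 0"
      then have np: "n > 0" using n0 by simp
      have "a - 2 * ((a+1)/(2*n)) * n + ((a+1)/(2*n))^2 * n * c \<ge> 0" by (rule key)
      then show False using np c by (simp add: field_simps)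
    qed
    then show ?thesis using c by (simp add: n_def u_def a_def c_def)
  qed
qed

lemma psd_qf_zero: assumes p: "psd M" and z: "Re (qf M x) = 0" shows "M *v x = 0"
proof -
  have "(cmod (cinner (M *v x) (M *v x)))^2 \<le> Re (qf M (M *v x)) * Re (qf M x)" by (rule psd_CS[OF p])
  then have "cmod (cinner (M *v x) (M *v x)) = 0" using z by simp
  then show ?thesis by (simp add: cinner_self_eq0)
qed

lemma qf_axis: "qf M (axis i 1) = M$i$i"
  by (simp add: qf_def cinner_axis_left mv_axis)

lemma trace_qf: "trace M = (\<Sum>i\<in>UNIV. qf M (axis i 1))"
  by (simp add: trace_def qf_axis)

lemma psd_diag: "psd M \<Longrightarrow> Re (M$i$i) \<ge> 0 \<and> Im (M$i$i) = 0"
proof -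
  assume p: "psd M"
  have "Im (qf M (axis i 1)) = 0 \<and> Re (qf M (axis i 1)) \<ge> 0" using p by (simp add: psd_qf)
  then show ?thesis by (simp add: qf_axis)
qed

lemma psd_trace_Re: "psd M \<Longrightarrow> Re (trace M) \<ge> 0"
  by (simp add: trace_def Re_sum psd_diag sum_nonneg)

lemma psd_trace_Im: "psd M \<Longrightarrow> Im (trace M) = 0"
  by (simp add: trace_def Im_sum psd_diag)

lemma psd_trace_real: "psd M \<Longrightarrow> trace M = of_real (Re (trace M))"
  using psd_trace_Im[of M] by (simp add: complex_eq_iff)

lemma psd_diag_le_trace: "psd M \<Longrightarrow> Re (M$i$i) \<le> Re (trace M)"
proof -
  assume p: "psd M"
  have "Re (trace M) = (\<Sum>k\<in>UNIV. Re (M$k$k))" by (simp add: trace_def Re_sum)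
  also have "\<dots> \<ge> Re (M$i$i)"
    by (rule member_le_sum) (auto simp: psd_diag[OF p])
  finally show ?thesis .
qed

lemma zero_cols: "(\<forall>i. (M::complex^'n^'n) *v axis i 1 = 0) \<Longrightarrow> M = 0"
proof -
  assume a: "\<forall>i. M *v axis i 1 = 0"
  have "M$j$i = 0" for i j
  proof -
    have "M$j$i = (M *v axis i 1)$j" by (simp add: mv_axis)
    then show ?thesis using a by simp
  qed
  then show "M = 0" by (simp add: vec_eq_iff)
qed

lemma psd_trace0: assumes p: "psd M" and t: "trace M = 0" shows "M = 0"
proof -
  have "(\<Sum>i\<in>UNIV. Re (M$i$i)) = 0" using t by (simp add: trace_def Re_sum[symmetric])
  then have "\<forall>i\<in>UNIV. Re (M$i$i) = 0"
    using sum_nonneg_eq_0_iff[of UNIV "\<lambda>i. Re (M$i$i)"] psd_diag[OF p] by auto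
  then have "M *v axis i 1 = 0" for i using psd_qf_zero[OF p, of "axis i 1"] by (simp add: qf_axis)
  then show ?thesis using zero_cols by blast
qed

lemma psd_entry_bound: assumes p: "psd M" shows "cmod (M$i$j) \<le> Re (trace M)"
proof -
  have "(cmod (cinner (axis i 1) (M *v axis j 1)))^2 \<le> Re (qf M (axis i 1)) * Re (qf M (axis j 1))"
    by (rule psd_CS[OF p])
  then have "(cmod (M$i$j))^2 \<le> Re (M$i$i) * Re (M$j$j)" by (simp add: cinner_axis_left mv_axis qf_axis)
  also have "\<dots> \<le> Re (trace M) * Re (trace M)"
    using psd_diag[OF p, of i] psd_diag[OF p, of j] psd_diag_le_trace[OF p, of i] psd_diag_le_trace[OF p, of j]
    by (intro mult_mono) auto
  finally have "(cmod (M$i$j))^2 \<le> (Re (trace M))^2" by (simp add: power2_eq_square)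
  then show ?thesis using psd_trace_Re[OF p] by (rule power2_le_imp_le)
qed

lemma norm_vec_le_sum: "norm (x::'a::real_normed_vector^'n) \<le> (\<Sum>i\<in>UNIV. norm (x$i))"
  unfolding norm_vec_def by (rule L2_set_le_sum) simp

lemma psd_norm_bound: assumes p: "psd (M::complex^'n^'n)"
  shows "norm M \<le> real (CARD('n))^2 * Re (trace M)"
proof -
  have "norm M \<le> (\<Sum>i\<in>UNIV. norm (M$i))" by (rule norm_vec_le_sum)
  also have "\<dots> \<le> (\<Sum>i\<in>(UNIV::'n set). \<Sum>j\<in>(UNIV::'n set). Re (trace M))"
  proof (rule sum_mono)
    fix i
    have "norm (M$i) \<le> (\<Sum>j\<in>UNIV. norm (M$i$j))" by (rule norm_vec_le_sum)
    also have "\<dots> \<le> (\<Sum>j\<in>(UNIV::'n set). Re (trace M))"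
      by (rule sum_mono) (simp add: psd_entry_bound[OF p])
    finally show "norm (M$i) \<le> (\<Sum>j\<in>(UNIV::'n set). Re (trace M))" .
  qed
  also have "\<dots> = real (CARD('n))^2 * Re (trace M)" by (simp add: power2_eq_square)
  finally show ?thesis .
qed



lemma outer_scaleR: "outer ((c::real) *\<^sub>R g) = (c^2) *\<^sub>R outer g"
  by (simp add: outer_def vec_eq_iff mscaleR_entry scaleR_conv_of_real[where 'a=complex] power2_eq_square mult_ac)

lemma smult_smult: "a *s (b *s x) = (a * b) *s (x::complex^'n)"
  by (simp add: vec_eq_iff mult.assoc)

lemma sum_outer_Suc:
  "(\<Sum>k<Suc m. outer ((ts(m := t)) k)) = (\<Sum>k<m. outer (ts k)) + outer t"
proof -
  have "(\<Sum>k<m. outer ((ts(m := t)) k)) = (\<Sum>k<m. outer (ts k))" by (intro sum.cong) auto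
  then show ?thesis by simp
qed

lemma psd_decomp_aux:
  fixes J :: "'n::finite set"
  assumes "finite J"
  shows "\<forall>G::complex^'n^'n. psd G \<longrightarrow> (\<forall>i. i \<notin> J \<longrightarrow> G *v axis i 1 = 0) \<longrightarrow>
           (\<exists>(m::nat) ts. G = (\<Sum>k<m. outer (ts k)))"
  using assms
proof (induction J rule: finite_induct)
  case empty
  show ?case
  proof (intro allI impI)
    fix G :: "complex^'n^'n" assume "\<forall>i. i \<notin> {} \<longrightarrow> G *v axis i 1 = 0"
    then have "G = 0" using zero_cols by auto
    then have "G = (\<Sum>k<(0::nat). outer ((\<lambda>_. 0) k))" by simp
    then show "\<exists>(m::nat) ts. G = (\<Sum>k<m. outer (ts k))" by (intro exI[where x="0::nat"] exI[where x="\<lambda>_. 0"])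
  qed
next
  case (insert j J)
  show ?case
  proof (intro allI impI)
    fix G :: "complex^'n^'n"
    assume p: "psd G" and z: "\<forall>i. i \<notin> insert j J \<longrightarrow> G *v axis i 1 = 0"
    have h: "herm G" using p psd_herm by blast
    define g where "g = G *v axis j 1"
    define d where "d = Re (G$j$j)"
    have gi: "g$i = G$i$j" for i by (simp add: g_def mv_axis)
    have Gjj: "G$j$j = of_real d" using psd_diag[OF p, of j] by (simp add: d_def complex_eq_iff)
    have d0: "d \<ge> 0" using psd_diag[OF p, of j] by (simp add: d_def)
    show "\<exists>(m::nat) ts. G = (\<Sum>k<m. outer (ts k))"
    proof (cases "d = 0")
      case True
      then have "Re (qf G (axis j 1)) = 0" by (simp add: qf_axis d_def)
      then have "G *v axis j 1 = 0" by (rule psd_qf_zero[OF p])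
      then have "\<forall>i. i \<notin> J \<longrightarrow> G *v axis i 1 = 0" using z by auto
      then show ?thesis using insert.IH p by blast
    next
      case False
      then have dp: "d > 0" using d0 by simp
      define G' where "G' = G - (1/d) *\<^sub>R outer g"
      have hG': "herm G'" unfolding G'_def by (intro herm_diff herm_scaleR herm_outer h)
      have qG': "Re (qf G' x) \<ge> 0" for x
      proof -
        have cs: "(cmod (cinner x (G *v axis j 1)))^2 \<le> Re (qf G x) * Re (qf G (axis j 1))"
          by (rule psd_CS[OF p])
        have "cmod (cinner g x) = cmod (cinner x (G *v axis j 1))"
          by (simp add: g_def cinner_commute[of "G *v axis j 1" x])
        then have cs2: "(cmod (cinner g x))^2 \<le> Re (qf G x) * d" using cs by (simp add: qf_axis d_def)
        have "Re (qf G' x) = Re (qf G x) - (1/d) * (cmod (cinner g x))^2"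
          by (simp add: G'_def qf_diff qf_scaleR qf_outer)
        also have "\<dots> \<ge> 0" using cs2 dp by (simp add: field_simps)
        finally show ?thesis .
      qed
      have pG': "psd G'" using hG' qG' psd_iff by blast
      have cg: "cinner g (axis i 1) = cnj (G$i$j)" for i by (simp add: cinner_axis_right gi)
      have "G' *v axis j 1 = g - (1/d) *\<^sub>R (cinner g (axis j 1) *s g)"
        by (simp add: G'_def mv_diff mv_scaleR outer_mv g_def)
      also have "\<dots> = g - (complex_of_real (1/d) * of_real d) *s g"
        by (simp add: cg Gjj scaleR_smult smult_smult)
      also have "\<dots> = 0" using dp by simp
      finally have zj: "G' *v axis j 1 = 0" .
      have zi: "G' *v axis i 1 = 0" if "i \<notin> J" for i
      proof (cases "i = j")
        case True then show ?thesis using zj by simp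
      next
        case False
        then have Gi: "G *v axis i 1 = 0" using z that by auto
        have "G$j$i = 0" using Gi mv_axis[of G i j] by simp
        moreover have "G$i$j = cnj (G$j$i)" using h unfolding herm_def by blast
        ultimately have "G$i$j = 0" by simp
        then show ?thesis by (simp add: G'_def mv_diff mv_scaleR outer_mv Gi cg)
      qed
      obtain m :: nat and ts where G'e: "G' = (\<Sum>k<m. outer (ts k))" using insert.IH pG' zi by blast
      have "G = G' + (1/d) *\<^sub>R outer g" by (simp add: G'_def)
      also have "(1/d) *\<^sub>R outer g = outer (sqrt (1/d) *\<^sub>R g)"
        using dp by (simp add: outer_scaleR)
      finally have "G = (\<Sum>k<Suc m. outer ((ts(m := sqrt (1/d) *\<^sub>R g)) k))"
        by (simp only: sum_outer_Suc G'e)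
      then show ?thesis by blast
    qed
  qed
qed

lemma psd_decomp:
  assumes "psd (G::complex^'n^'n)"
  obtains m :: nat and ts where "G = (\<Sum>k<m. outer (ts k))"
proof -
  have "\<exists>(m::nat) ts. G = (\<Sum>k<m. outer (ts k))"
    by (rule psd_decomp_aux[of "UNIV::'n set", rule_format]) (auto simp: assms)
  then show thesis using that by blast
qed



lemma trace_mm: "trace ((A::complex^'n^'n) ** X) = (\<Sum>i\<in>UNIV. \<Sum>j\<in>UNIV. A$i$j * X$j$i)"
  by (simp add: trace_def matrix_matrix_mult_def)

lemma cscaleR: "(c::real) *\<^sub>R (z::complex) = of_real c * z"
  by (simp add: scaleR_conv_of_real)

lemma trace_zero': "trace (0::complex^'n^'n) = 0" by (simp add: trace_def)

lemma trace_add': "trace ((A::complex^'n^'n) + B) = trace A + trace B"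
  by (simp add: trace_def sum.distrib)
lemma trace_scaleR': "trace ((c::real) *\<^sub>R (A::complex^'n^'n)) = of_real c * trace A"
  by (simp add: trace_def mscaleR_entry cscaleR sum_distrib_left)
lemma trace_cscale: "trace (cscale c (A::complex^'n^'n)) = c * trace A"
  by (simp add: trace_def cscale_def sum_distrib_left)
lemma trace_sum': "trace (\<Sum>k\<in>K. (B k::complex^'n^'n)) = (\<Sum>k\<in>K. trace (B k))"
  by (induction K rule: infinite_finite_induct) (auto simp: trace_add' trace_zero')
lemma trace_outer: "trace (outer x) = cinner x x"
  by (simp add: trace_def outer_def cinner_def mult.commute)

lemma tmm_add_left: "trace ((A + B) ** (X::complex^'n^'n)) = trace (A ** X) + trace (B ** X)"
  by (simp add: trace_mm sum.distrib algebra_simps)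
lemma tmm_add_right: "trace (A ** ((X::complex^'n^'n) + Y)) = trace (A ** X) + trace (A ** Y)"
  by (simp add: trace_mm sum.distrib algebra_simps)
lemma tmm_scaleR_left: "trace (((c::real) *\<^sub>R A) ** (X::complex^'n^'n)) = of_real c * trace (A ** X)"
  by (simp add: trace_mm mscaleR_entry cscaleR sum_distrib_left mult.assoc)
lemma tmm_scaleR_right: "trace (A ** ((c::real) *\<^sub>R (X::complex^'n^'n))) = of_real c * trace (A ** X)"
  by (simp add: trace_mm mscaleR_entry cscaleR sum_distrib_left mult.left_commute)
lemma tmm_cscale_right: "trace (A ** cscale c (X::complex^'n^'n)) = c * trace (A ** X)"
  by (simp add: trace_mm cscale_def sum_distrib_left mult.left_commute)
lemma tmm_diff_right: "trace (A ** ((X::complex^'n^'n) - Y)) = trace (A ** X) - trace (A ** Y)"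
  by (simp add: trace_mm sum_subtractf[symmetric] right_diff_distrib)
lemma tmm_mat1: "trace (mat 1 ** (X::complex^'n^'n)) = trace X"
  by simp
lemma tmm_zero_left: "trace (0 ** (X::complex^'n^'n)) = 0"
  by (simp add: trace_zero')
lemma tmm_sum_left: "trace ((\<Sum>k\<in>K. B k) ** (X::complex^'n^'n)) = (\<Sum>k\<in>K. trace (B k ** X))"
  by (induction K rule: infinite_finite_induct) (auto simp: tmm_add_left tmm_zero_left trace_zero')

lemma tmm_outer: "trace (outer a ** (X::complex^'n^'n)) = cinner a (X *v a)"
proof -
  have "trace (outer a ** X) = (\<Sum>i\<in>UNIV. \<Sum>j\<in>UNIV. a$i * cnj (a$j) * X$j$i)"
    by (simp add: trace_mm outer_def)
  also have "\<dots> = (\<Sum>j\<in>UNIV. \<Sum>i\<in>UNIV. a$i * cnj (a$j) * X$j$i)" by (rule sum.swap)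
  also have "\<dots> = cinner a (X *v a)"
    unfolding cinner_def matrix_vector_mult_def
    by (simp add: sum_distrib_left mult_ac)
  finally show ?thesis .
qed

lemma qf_zero: "qf 0 x = 0" by (simp add: qf_def)

lemma qf_sum: "qf (\<Sum>k\<in>K. B k) x = (\<Sum>k\<in>K. qf (B k) x)"
  by (induction K rule: infinite_finite_induct) (auto simp: qf_add qf_zero)

lemma tmm_decomp: "trace ((\<Sum>k<m. outer (as k)) ** (X::complex^'n^'n)) = (\<Sum>k<m. qf X (as k))"
  by (simp add: tmm_sum_left tmm_outer qf_def)

lemma cinner_CS: "(cmod (cinner x y))^2 \<le> Re (cinner x x) * Re (cinner y y)"
  using psd_CS[OF psd_mat1, of x y] by (simp add: qf_mat1)

lemma qf_le_trace:
  assumes p: "psd (X::complex^'n^'n)"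
  shows "Re (qf X a) \<le> Re (trace X) * Re (cinner a a)"
proof -
  obtain m :: nat and xs where X: "X = (\<Sum>k<m. outer (xs k))" using psd_decomp[OF p] by blast
  have "Re (qf X a) = (\<Sum>k<m. (cmod (cinner (xs k) a))^2)"
    by (simp add: X qf_sum qf_outer Re_sum)
  also have "\<dots> \<le> (\<Sum>k<m. Re (cinner (xs k) (xs k)) * Re (cinner a a))"
    by (rule sum_mono) (rule cinner_CS)
  also have "\<dots> = Re (trace X) * Re (cinner a a)"
    by (simp add: X trace_sum' trace_outer Re_sum sum_distrib_right)
  finally show ?thesis .
qed

lemma tmm_psd:
  assumes pA: "psd (A::complex^'n^'n)" and pX: "psd X"
  shows "Im (trace (A ** X)) = 0" "Re (trace (A ** X)) \<ge> 0"
        "Re (trace (A ** X)) \<le> Re (trace A) * Re (trace X)"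
proof -
  obtain m :: nat and as where A: "A = (\<Sum>k<m. outer (as k))" using psd_decomp[OF pA] by blast
  have t: "trace (A ** X) = (\<Sum>k<m. qf X (as k))" by (simp add: A tmm_decomp)
  show "Im (trace (A ** X)) = 0" using pX by (simp add: t Im_sum psd_qf)
  show "Re (trace (A ** X)) \<ge> 0" using pX by (simp add: t Re_sum psd_qf sum_nonneg)
  have "Re (trace (A ** X)) = (\<Sum>k<m. Re (qf X (as k)))" by (simp add: t Re_sum)
  also have "\<dots> \<le> (\<Sum>k<m. Re (trace X) * Re (cinner (as k) (as k)))"
    by (rule sum_mono) (rule qf_le_trace[OF pX])
  also have "\<dots> = Re (trace A) * Re (trace X)"
    by (simp add: A trace_sum' trace_outer Re_sum sum_distrib_left mult.commute)
  finally show "Re (trace (A ** X)) \<le> Re (trace A) * Re (trace X)" .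
qed

lemma tmm_herm:
  assumes pA: "psd (A::complex^'n^'n)" and hX: "herm X"
  shows "Im (trace (A ** X)) = 0"
proof -
  obtain m :: nat and as where A: "A = (\<Sum>k<m. outer (as k))" using psd_decomp[OF pA] by blast
  show ?thesis using qf_real[OF hX] by (simp add: A tmm_decomp Im_sum)
qed



lemma cscale_add_left: "cscale (a + b) T = cscale a T + cscale b (T::complex^'n^'n)"
  by (simp add: cscale_def vec_eq_iff algebra_simps)
lemma cscale_mult: "cscale (a * b) T = cscale a (cscale b (T::complex^'n^'n))"
  by (simp add: cscale_def vec_eq_iff algebra_simps)
lemma cscale_of_real: "cscale (of_real c) T = c *\<^sub>R (T::complex^'n^'n)"
  by (simp add: cscale_def vec_eq_iff mscaleR_entry cscaleR)

lemma sum_swap4: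
  "(\<Sum>a\<in>A. \<Sum>b\<in>B. \<Sum>p\<in>P. \<Sum>r\<in>R. f a b p r) = (\<Sum>p\<in>P. \<Sum>r\<in>R. \<Sum>a\<in>A. \<Sum>b\<in>B. f a b p r)"
proof -
  have "(\<Sum>a\<in>A. \<Sum>b\<in>B. \<Sum>p\<in>P. \<Sum>r\<in>R. f a b p r) = (\<Sum>a\<in>A. \<Sum>p\<in>P. \<Sum>b\<in>B. \<Sum>r\<in>R. f a b p r)"
    by (rule sum.cong[OF refl], rule sum.swap)
  also have "\<dots> = (\<Sum>p\<in>P. \<Sum>a\<in>A. \<Sum>b\<in>B. \<Sum>r\<in>R. f a b p r)" by (rule sum.swap)
  also have "\<dots> = (\<Sum>p\<in>P. \<Sum>a\<in>A. \<Sum>r\<in>R. \<Sum>b\<in>B. f a b p r)"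
    by (rule sum.cong[OF refl], rule sum.cong[OF refl], rule sum.swap)
  also have "\<dots> = (\<Sum>p\<in>P. \<Sum>r\<in>R. \<Sum>a\<in>A. \<Sum>b\<in>B. f a b p r)"
    by (rule sum.cong[OF refl], rule sum.swap)
  finally show ?thesis .
qed

lemma cp_mp:
  fixes A :: "complex^'a^'a" and T :: "complex^'b^'b"
  assumes pA: "psd A" and pT: "psd T"
  shows "completely_positive (\<lambda>X. cscale (trace (A ** X)) T)"
proof -
  obtain m1 :: nat and as where Ae: "A = (\<Sum>p<m1. outer (as p))" using psd_decomp[OF pA] by blast
  obtain m2 :: nat and ts where Te: "T = (\<Sum>r<m2. outer (ts r))" using psd_decomp[OF pT] by blast
  have lin: "clinear_map (\<lambda>X. cscale (trace (A ** X)) T)"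
    unfolding clinear_map_def
    by (simp add: tmm_add_right tmm_cscale_right cscale_add_left cscale_mult)
  have blk: "block_psd k (\<lambda>a b. cscale (trace (A ** M a b)) T)" if bp: "block_psd k M" for k M
    unfolding block_psd_def Let_def
  proof (intro allI)
    fix v :: "nat \<Rightarrow> complex^'b"
    define w where "w p r a = cinner (ts r) (v a) *s as p" for p r a
    define Q where "Q p r = (\<Sum>a<k. \<Sum>b<k. cinner (w p r a) (M a b *v w p r b))" for p r
    have Qp: "Im (Q p r) = 0 \<and> Re (Q p r) \<ge> 0" for p r
      using bp unfolding block_psd_def Let_def Q_def by blast
    have trm: "cinner (v a) (cscale (trace (A ** M a b)) T *v v b) =
                (\<Sum>p<m1. \<Sum>r<m2. cinner (w p r a) (M a b *v w p r b))" for a b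
    proof -
      have e1: "trace (A ** M a b) = (\<Sum>p<m1. cinner (as p) (M a b *v as p))"
        by (simp add: Ae tmm_decomp qf_def)
      have e2: "cinner (v a) (T *v v b) = (\<Sum>r<m2. cinner (ts r) (v b) * cinner (v a) (ts r))"
        by (simp add: Te mv_sum outer_mv cinner_sum_right cinner_smult_right)
      have "cinner (v a) (cscale (trace (A ** M a b)) T *v v b) =
            trace (A ** M a b) * cinner (v a) (T *v v b)"
        by (simp add: mv_cscale cinner_smult_right)
      also have "\<dots> = (\<Sum>p<m1. cinner (as p) (M a b *v as p)) * (\<Sum>r<m2. cinner (ts r) (v b) * cinner (v a) (ts r))"
        by (simp only: e1 e2)
      also have "(\<Sum>p<m1. cinner (as p) (M a b *v as p)) * (\<Sum>r<m2. cinner (ts r) (v b) * cinner (v a) (ts r))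
          = (\<Sum>p<m1. \<Sum>r<m2. cinner (as p) (M a b *v as p) * (cinner (ts r) (v b) * cinner (v a) (ts r)))"
        by (rule sum_product)
      also have "\<dots> = (\<Sum>p<m1. \<Sum>r<m2. cinner (w p r a) (M a b *v w p r b))"
      proof (intro sum.cong refl)
        fix p r
        have "cinner (w p r a) (M a b *v w p r b) =
              cnj (cinner (ts r) (v a)) * (cinner (ts r) (v b) * cinner (as p) (M a b *v as p))"
          by (simp add: w_def mv_smult cinner_smult_left cinner_smult_right)
        also have "cnj (cinner (ts r) (v a)) = cinner (v a) (ts r)" by (simp add: cinner_commute[of "v a"])
        finally show "cinner (as p) (M a b *v as p) * (cinner (ts r) (v b) * cinner (v a) (ts r)) =
              cinner (w p r a) (M a b *v w p r b)" by (simp add: mult_ac)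
      qed
      finally show ?thesis .
    qed
    have "(\<Sum>a<k. \<Sum>b<k. cinner (v a) (cscale (trace (A ** M a b)) T *v v b)) = (\<Sum>p<m1. \<Sum>r<m2. Q p r)"
      unfolding trm Q_def by (rule sum_swap4)
    moreover have "Im (\<Sum>p<m1. \<Sum>r<m2. Q p r) = 0" by (simp add: Im_sum Qp)
    moreover have "Re (\<Sum>p<m1. \<Sum>r<m2. Q p r) \<ge> 0" by (simp add: Re_sum Qp sum_nonneg)
    ultimately show "Im (\<Sum>a<k. \<Sum>b<k. cinner (v a) (cscale (trace (A ** M a b)) T *v v b)) = 0 \<and>
        Re (\<Sum>a<k. \<Sum>b<k. cinner (v a) (cscale (trace (A ** M a b)) T *v v b)) \<ge> 0" by simp
  qed
  show ?thesis unfolding completely_positive_def using lin blk by blast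
qed

lemma cp_add:
  assumes "completely_positive (E1::complex^'a^'a \<Rightarrow> complex^'b^'b)" "completely_positive E2"
  shows "completely_positive (\<lambda>X. E1 X + E2 X)"
proof -
  have lin: "clinear_map (\<lambda>X. E1 X + E2 X)"
    using assms unfolding completely_positive_def clinear_map_def
    by (simp add: cscale_def vec_eq_iff algebra_simps)
  have "block_psd k (\<lambda>a b. E1 (M a b) + E2 (M a b))" if bp: "block_psd k M" for k M
    unfolding block_psd_def Let_def
  proof (intro allI)
    fix v :: "nat \<Rightarrow> complex^'b"
    have b1: "block_psd k (\<lambda>a b. E1 (M a b))" and b2: "block_psd k (\<lambda>a b. E2 (M a b))"
      using assms bp unfolding completely_positive_def by blast+
    have "(\<Sum>a<k. \<Sum>b<k. cinner (v a) ((E1 (M a b) + E2 (M a b)) *v v b)) =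
          (\<Sum>a<k. \<Sum>b<k. cinner (v a) (E1 (M a b) *v v b)) + (\<Sum>a<k. \<Sum>b<k. cinner (v a) (E2 (M a b) *v v b))"
      by (simp add: mv_add cinner_add_right sum.distrib)
    moreover have "Im (\<Sum>a<k. \<Sum>b<k. cinner (v a) (E1 (M a b) *v v b)) = 0 \<and>
         Re (\<Sum>a<k. \<Sum>b<k. cinner (v a) (E1 (M a b) *v v b)) \<ge> 0"
      using b1 unfolding block_psd_def Let_def by blast
    moreover have "Im (\<Sum>a<k. \<Sum>b<k. cinner (v a) (E2 (M a b) *v v b)) = 0 \<and>
         Re (\<Sum>a<k. \<Sum>b<k. cinner (v a) (E2 (M a b) *v v b)) \<ge> 0"
      using b2 unfolding block_psd_def Let_def by blast
    ultimately show "Im (\<Sum>a<k. \<Sum>b<k. cinner (v a) ((E1 (M a b) + E2 (M a b)) *v v b)) = 0 \<and>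
       Re (\<Sum>a<k. \<Sum>b<k. cinner (v a) ((E1 (M a b) + E2 (M a b)) *v v b)) \<ge> 0"
      by simp
  qed
  then show ?thesis using lin unfolding completely_positive_def by blast
qed



definition reach :: "(complex^'a^'a) set \<Rightarrow> (complex^'b^'b) set \<Rightarrow> complex^'a^'a \<Rightarrow> complex^'b^'b \<Rightarrow> bool" where
  "reach F F' \<rho> \<rho>'' \<longleftrightarrow> (\<exists>E\<in>free_ops F F'. Re (trace (E \<rho>)) > 0 \<and> (1 / Re (trace (E \<rho>))) *\<^sub>R E \<rho> = \<rho>'')"

lemma pt_iff: "prob_transformable F F' \<rho> \<rho>' \<longleftrightarrow> \<rho>' \<in> closure {x. reach F F' \<rho> x}"
proof -
  have "{(1 / Re (trace (E \<rho>))) *\<^sub>R E \<rho> | E. E \<in> free_ops F F' \<and> Re (trace (E \<rho>)) > 0} = {x. reach F F' \<rho> x}"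
    unfolding reach_def by blast
  then show ?thesis unfolding prob_transformable_def by simp
qed

lemma trace_diff': "trace ((A::complex^'n^'n) - B) = trace A - trace B"
  by (simp add: trace_def sum_subtractf)

lemma dens: "\<rho> \<in> density_ops \<Longrightarrow> psd \<rho> \<and> trace \<rho> = 1"
  by (simp add: density_ops_def)

lemma reach_intro:
  assumes "E \<in> free_ops F F'" "E \<rho> = \<kappa> *\<^sub>R \<rho>''" "\<kappa> > 0" "\<rho>'' \<in> density_ops"
  shows "reach F F' \<rho> \<rho>''"
proof -
  have "Re (trace (E \<rho>)) = \<kappa>" using assms(2,4) by (simp add: trace_scaleR' dens)
  then show ?thesis unfolding reach_def using assms by (intro bexI[of _ E]) auto
qed

lemma free_ops_intro:
  assumes cp: "completely_positive E"
    and tn: "\<And>X. psd X \<Longrightarrow> Re (trace (E X)) \<le> Re (trace X)"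
    and fr: "\<And>\<sigma>. \<sigma> \<in> F \<Longrightarrow> \<exists>\<sigma>'\<in>F'. \<exists>p. p \<ge> 0 \<and> E \<sigma> = p *\<^sub>R \<sigma>'"
    and dF: "F \<subseteq> density_ops" and dF': "F' \<subseteq> density_ops"
  shows "E \<in> free_ops F F'"
proof -
  have "\<exists>\<sigma>'\<in>F'. \<exists>p::real. 0 \<le> p \<and> p \<le> 1 \<and> E \<sigma> = p *\<^sub>R \<sigma>'" if s: "\<sigma> \<in> F" for \<sigma>
  proof -
    obtain \<sigma>' p where s': "\<sigma>' \<in> F'" "p \<ge> 0" "E \<sigma> = p *\<^sub>R \<sigma>'" using fr[OF s] by blast
    have "Re (trace (E \<sigma>)) = p" using s' dF' by (auto simp: trace_scaleR' dens)
    moreover have "Re (trace (E \<sigma>)) \<le> 1" using tn[of \<sigma>] s dF by (auto simp: dens)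
    ultimately show ?thesis using s' by blast
  qed
  then show ?thesis unfolding free_ops_def trace_nonincreasing_def using cp tn by blast
qed

lemma lam_ge1:
  assumes "\<rho> \<in> density_ops" "\<sigma> \<in> density_ops" "psd (l *\<^sub>R \<sigma> - \<rho>)"
  shows "l \<ge> 1"
proof -
  have "Re (trace (l *\<^sub>R \<sigma> - \<rho>)) \<ge> 0" using assms(3) by (rule psd_trace_Re)
  then show ?thesis using assms(1,2) by (simp add: trace_diff' trace_scaleR' dens)
qed

lemma Rmax_ge1:
  assumes "\<rho> \<in> density_ops" "\<sigma> \<in> density_ops"
  shows "Rmax \<rho> \<sigma> \<ge> 1"
  unfolding Rmax_def
proof (rule Inf_greatest)
  fix x assume "x \<in> {ereal l |l. loewner_le \<rho> (l *\<^sub>R \<sigma>)}"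
  then obtain l where "x = ereal l" "psd (l *\<^sub>R \<sigma> - \<rho>)" by (auto simp: loewner_le_def)
  then show "1 \<le> x" using lam_ge1[OF assms] by simp
qed

lemma Rmax_le: "loewner_le X (l *\<^sub>R Y) \<Longrightarrow> Rmax X Y \<le> ereal l"
  unfolding Rmax_def by (rule Inf_lower) blast

lemma Omega_le:
  assumes dF: "F \<subseteq> density_ops" and s: "\<sigma> \<in> F" and r: "\<rho> \<in> density_ops"
    and l1: "loewner_le \<rho> (l *\<^sub>R \<sigma>)" and l2: "loewner_le \<sigma> (m *\<^sub>R \<rho>)"
  shows "OmegaF F \<rho> \<le> ereal (l * m)"
proof -
  have sd: "\<sigma> \<in> density_ops" using dF s by blast
  have lg: "l \<ge> 1" using lam_ge1[OF r sd] l1 by (simp add: loewner_le_def)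
  have "OmegaF F \<rho> \<le> Rmax \<rho> \<sigma> * Rmax \<sigma> \<rho>" unfolding OmegaF_def by (rule INF_lower[OF s])
  also have "\<dots> \<le> ereal l * ereal m"
  proof (rule ereal_mult_mono)
    show "0 \<le> ereal l" using lg by simp
    have "(0::ereal) \<le> 1" by simp
    then show "0 \<le> Rmax \<sigma> \<rho>" using Rmax_ge1[OF sd r] by (rule order.trans)
    show "Rmax \<rho> \<sigma> \<le> ereal l" by (rule Rmax_le[OF l1])
    show "Rmax \<sigma> \<rho> \<le> ereal m" by (rule Rmax_le[OF l2])
  qed
  finally show ?thesis by simp
qed

lemma RF_le:
  assumes s: "\<sigma> \<in> F" and l1: "loewner_le \<rho> (l *\<^sub>R \<sigma>)"
  shows "RF F \<rho> \<le> ereal l"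
proof -
  have "RF F \<rho> \<le> Rmax \<rho> \<sigma>" unfolding RF_def by (rule INF_lower[OF s])
  also have "\<dots> \<le> ereal l" by (rule Rmax_le[OF l1])
  finally show ?thesis .
qed

lemma Rmax_lt_witness:
  assumes "Rmax X Y < ereal c"
  shows "\<exists>l. l < c \<and> loewner_le X (l *\<^sub>R Y)"
proof -
  have "Inf {ereal l |l. loewner_le X (l *\<^sub>R Y)} < ereal c" using assms by (simp add: Rmax_def)
  then have "\<exists>x\<in>{ereal l |l. loewner_le X (l *\<^sub>R Y)}. x < ereal c" by (rule Inf_less_iff[THEN iffD1])
  then obtain x where x1: "x \<in> {ereal l |l. loewner_le X (l *\<^sub>R Y)}" and x2: "x < ereal c" by (elim bexE)
  from x1 obtain l where "x = ereal l" "loewner_le X (l *\<^sub>R Y)" by (elim CollectE exE conjE)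
  then show ?thesis using x2 by auto
qed

lemma RF_witness:
  assumes "RF F \<rho> < \<infinity>"
  shows "\<exists>\<sigma>\<in>F. \<exists>l. loewner_le \<rho> (l *\<^sub>R \<sigma>)"
proof -
  have "(INF \<sigma>\<in>F. Rmax \<rho> \<sigma>) < \<infinity>" using assms by (simp add: RF_def)
  then have "\<exists>\<sigma>\<in>F. Rmax \<rho> \<sigma> < \<infinity>" by (rule INF_less_iff[THEN iffD1])
  then obtain \<sigma> where s1: "\<sigma> \<in> F" and s2: "Rmax \<rho> \<sigma> < \<infinity>" by (elim bexE)
  obtain c where c: "Rmax \<rho> \<sigma> < ereal c"
  proof (cases "Rmax \<rho> \<sigma>")
    case (real r) then show ?thesis using that[of "r + 1"] by simp
  next
    case PInf then show ?thesis using s2 by simp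
  next
    case MInf then show ?thesis using that[of 0] by simp
  qed
  obtain l where "loewner_le \<rho> (l *\<^sub>R \<sigma>)" using Rmax_lt_witness[OF c] by (elim exE conjE)
  then show ?thesis using s1 by (intro bexI[of _ \<sigma>] exI[of _ l])
qed

lemma Omega_witness:
  assumes dF: "F \<subseteq> density_ops" and r: "\<rho> \<in> density_ops" and lt: "OmegaF F \<rho> < ereal c"
  shows "\<exists>\<sigma>\<in>F. \<exists>l m. loewner_le \<rho> (l *\<^sub>R \<sigma>) \<and> loewner_le \<sigma> (m *\<^sub>R \<rho>) \<and> l * m < c"
proof -
  have "(INF \<sigma>\<in>F. Rmax \<rho> \<sigma> * Rmax \<sigma> \<rho>) < ereal c" using lt by (simp add: OmegaF_def)
  then have "\<exists>\<sigma>\<in>F. Rmax \<rho> \<sigma> * Rmax \<sigma> \<rho> < ereal c" by (rule INF_less_iff[THEN iffD1])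
  then obtain \<sigma> where s: "\<sigma> \<in> F" and pl: "Rmax \<rho> \<sigma> * Rmax \<sigma> \<rho> < ereal c" by (elim bexE)
  have sd: "\<sigma> \<in> density_ops" using dF s by blast
  have g1: "Rmax \<rho> \<sigma> \<ge> 1" and g2: "Rmax \<sigma> \<rho> \<ge> 1" using Rmax_ge1 r sd by auto
  have z1: "(0::ereal) < 1" by simp
  have p1: "Rmax \<rho> \<sigma> > 0" using z1 g1 by (rule less_le_trans)
  have p2: "Rmax \<sigma> \<rho> > 0" using z1 g2 by (rule less_le_trans)
  have n1: "Rmax \<rho> \<sigma> \<noteq> 0" using p1 by simp
  have n2: "Rmax \<sigma> \<rho> \<noteq> 0" using p2 by simp
  obtain a where a: "Rmax \<rho> \<sigma> = ereal a"
  proof (cases "Rmax \<rho> \<sigma>")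
    case (real r) then show ?thesis using that by blast
  next
    case PInf then show ?thesis using pl p2 n2 by simp
  next
    case MInf then show ?thesis using g1 by simp
  qed
  obtain b where b: "Rmax \<sigma> \<rho> = ereal b"
  proof (cases "Rmax \<sigma> \<rho>")
    case (real r) then show ?thesis using that by blast
  next
    case PInf then show ?thesis using pl p1 n1 by simp
  next
    case MInf then show ?thesis using g2 by simp
  qed
  have a1: "a \<ge> 1" and b1: "b \<ge> 1" using g1 g2 a b by auto
  have abc: "a * b < c" using pl a b by simp
  define d where "d = min 1 ((c - a * b) / (a + b + 1))"
  have d0: "d > 0" using abc a1 b1 by (simp add: d_def)
  have d1: "d \<le> 1" by (simp add: d_def)
  have d2: "d * (a + b + 1) \<le> c - a * b"
  proof -
    have "d \<le> (c - a * b) / (a + b + 1)" by (simp add: d_def)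
    then show ?thesis using a1 b1 by (simp add: field_simps)
  qed
  have "Rmax \<rho> \<sigma> < ereal (a + d)" using a d0 by simp
  then obtain l where l: "l < a + d" "loewner_le \<rho> (l *\<^sub>R \<sigma>)"
    using Rmax_lt_witness by blast
  have "Rmax \<sigma> \<rho> < ereal (b + d)" using b d0 by simp
  then obtain m where m: "m < b + d" "loewner_le \<sigma> (m *\<^sub>R \<rho>)"
    using Rmax_lt_witness by blast
  have l1: "l \<ge> 1" using lam_ge1[OF r sd] l(2) by (simp add: loewner_le_def)
  have m1: "m \<ge> 1" using lam_ge1[OF sd r] m(2) by (simp add: loewner_le_def)
  have "l * m < (a + d) * (b + d)" using l(1) m(1) l1 m1 d0 a1 by (intro mult_strict_mono) auto
  also have "\<dots> = a * b + d * (a + b) + d * d" by (simp add: algebra_simps)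
  also have "\<dots> \<le> a * b + d * (a + b + 1)" using d0 d1 by (simp add: algebra_simps)
  also have "\<dots> \<le> c" using d2 by simp
  finally show ?thesis using s l(2) m(2) by blast
qed

lemma cscale_one: "cscale 1 T = (T::complex^'n^'n)" by (simp add: cscale_def vec_eq_iff)

lemma reach_free:
  assumes dF: "F \<subseteq> density_ops" and dF': "F' \<subseteq> density_ops"
    and r: "\<rho> \<in> density_ops" and s: "\<rho>'' \<in> F'"
  shows "reach F F' \<rho> \<rho>''"
proof -
  have sd: "\<rho>'' \<in> density_ops" using s dF' by blast
  define E where "E X = cscale (trace (mat 1 ** X)) \<rho>''" for X :: "complex^'a^'a"
  have cp: "completely_positive E" unfolding E_def by (rule cp_mp[OF psd_mat1]) (use sd in \<open>simp add: dens\<close>)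
  have tn: "Re (trace (E X)) \<le> Re (trace X)" if "psd X" for X
    using sd by (simp add: E_def trace_cscale dens)
  have Es: "E \<sigma> = 1 *\<^sub>R \<rho>''" if "\<sigma> \<in> density_ops" for \<sigma>
    using that by (simp add: E_def dens cscale_one)
  have "E \<in> free_ops F F'"
  proof (rule free_ops_intro[OF cp tn _ dF dF'])
    fix \<sigma> assume "\<sigma> \<in> F"
    then have "E \<sigma> = 1 *\<^sub>R \<rho>''" using Es dF by blast
    then show "\<exists>\<sigma>'\<in>F'. \<exists>p. p \<ge> 0 \<and> E \<sigma> = p *\<^sub>R \<sigma>'" using s by (intro bexI[of _ \<rho>''] exI[of _ 1]) auto
  qed
  then show ?thesis by (rule reach_intro[where \<kappa>=1]) (use Es r sd in auto)
qed



definition hp :: "complex^'n^'n \<Rightarrow> complex^'n^'n" where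
  "hp Y = (\<chi> i j. (Y$i$j + cnj (Y$j$i)) / 2)"

lemma herm_hp: "herm (hp Y)"
  by (simp add: herm_iff hp_def add.commute)

lemma inner_mat: "(Y::complex^'n^'n) \<bullet> X = (\<Sum>i\<in>UNIV. \<Sum>j\<in>UNIV. Re (Y$i$j) * Re (X$i$j) + Im (Y$i$j) * Im (X$i$j))"
  by (simp add: inner_vec_def inner_complex_def)

lemma hp_trace:
  assumes h: "herm X"
  shows "trace (hp Y ** X) = of_real (Y \<bullet> X)"
proof -
  have hx: "X$j$i = cnj (X$i$j)" for i j using h unfolding herm_def by blast
  define f where "f i j = Y$i$j * cnj (X$i$j)" for i j
  define g where "g i j = cnj (Y$i$j) * X$i$j" for i j
  have pt: "hp Y$i$j * X$j$i = (f i j + g j i) / 2" for i j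
    by (simp add: hp_def f_def g_def hx[of j i] distrib_right)
  have "trace (hp Y ** X) = (\<Sum>i\<in>UNIV. \<Sum>j\<in>UNIV. (f i j + g j i) / 2)"
    unfolding trace_mm pt ..
  also have "\<dots> = ((\<Sum>i\<in>UNIV. \<Sum>j\<in>UNIV. f i j) + (\<Sum>i\<in>UNIV. \<Sum>j\<in>UNIV. g j i)) / 2"
    by (simp only: sum_divide_distrib[symmetric] sum.distrib)
  also have "(\<Sum>i\<in>UNIV. \<Sum>j\<in>UNIV. g j i) = (\<Sum>j\<in>UNIV. \<Sum>i\<in>UNIV. g j i)"
    by (rule sum.swap)
  also have "((\<Sum>i\<in>UNIV. \<Sum>j\<in>UNIV. f i j) + (\<Sum>j\<in>UNIV. \<Sum>i\<in>UNIV. g j i)) / 2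
      = (\<Sum>i\<in>UNIV. \<Sum>j\<in>UNIV. (f i j + g i j) / 2)"
    by (simp only: sum_divide_distrib[symmetric] sum.distrib)
  also have "\<dots> = (\<Sum>i\<in>UNIV. \<Sum>j\<in>UNIV. of_real (Re (Y$i$j) * Re (X$i$j) + Im (Y$i$j) * Im (X$i$j)))"
  proof (intro sum.cong refl)
    fix i j
    show "(f i j + g i j) / 2 = complex_of_real (Re (Y$i$j) * Re (X$i$j) + Im (Y$i$j) * Im (X$i$j))"
      unfolding f_def g_def complex_eq_iff by simp
  qed
  also have "\<dots> = of_real (Y \<bullet> X)" by (simp only: inner_mat of_real_sum)
  finally show ?thesis .
qed

lemma qf_trace: "qf M x = trace (M ** outer x)"
proof -
  have "qf M x = (\<Sum>i\<in>UNIV. \<Sum>j\<in>UNIV. cnj (x$i) * (M$i$j * x$j))"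
    by (simp add: qf_def cinner_def matrix_vector_mult_def sum_distrib_left)
  also have "\<dots> = trace (M ** outer x)"
    by (simp add: trace_mm outer_def mult_ac)
  finally show ?thesis .
qed

lemma psd_hp:
  assumes "\<And>P. psd P \<Longrightarrow> Y \<bullet> P \<ge> 0"
  shows "psd (hp Y)"
proof -
  have "Re (qf (hp Y) x) \<ge> 0" for x
    using assms[OF psd_outer[of x]] by (simp add: qf_trace hp_trace herm_outer)
  then show ?thesis using herm_hp psd_iff by blast
qed

lemma span_herm: "x \<in> span F \<Longrightarrow> (\<And>y. y \<in> F \<Longrightarrow> herm y) \<Longrightarrow> herm (x::complex^'n^'n)"
proof -
  assume x: "x \<in> span F" and h: "\<And>y. y \<in> F \<Longrightarrow> herm y"
  have "subspace {y::complex^'n^'n. herm y}"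
    unfolding subspace_def by (auto intro: herm_zero herm_add herm_scaleR)
  then show ?thesis using span_induct[OF x, of herm] h by blast
qed

lemma affine_hull_of_span:
  assumes x: "x \<in> span F" and t1: "\<And>y. y \<in> F \<Longrightarrow> trace y = 1" and tx: "trace (x::complex^'n^'n) = 1"
  shows "x \<in> affine hull F"
proof -
  obtain t r where t: "finite t" "t \<subseteq> F" and xe: "x = (\<Sum>a\<in>t. r a *\<^sub>R a)"
    using x unfolding span_explicit by blast
  have "trace x = (\<Sum>a\<in>t. of_real (r a) * trace a)" by (simp add: xe trace_sum' trace_scaleR')
  also have "\<dots> = of_real (\<Sum>a\<in>t. r a)" using t t1 by (simp add: subset_iff)
  finally have "of_real (\<Sum>a\<in>t. r a) = (1::complex)" using tx by simp
  then have s1: "(\<Sum>a\<in>t. r a) = 1" by (simp only: of_real_eq_1_iff)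
  then have "t \<noteq> {}" by auto
  then show ?thesis unfolding affine_hull_explicit using t s1 xe by blast
qed

lemma F_char:
  assumes aff: "affine_free_set F" and x: "x \<in> span F" and d: "x \<in> density_ops"
  shows "x \<in> F"
proof -
  have dF: "F \<subseteq> density_ops" using aff by (simp add: affine_free_set_def)
  have "x \<in> affine hull F"
    by (rule affine_hull_of_span[OF x]) (use dF d in \<open>auto simp: dens\<close>)
  then have "x \<in> affine hull F \<inter> density_ops" using d by blast
  also have "\<dots> = F" using aff by (simp add: affine_free_set_def)
  finally show ?thesis .
qed

lemma qf_tendsto:
  assumes "P \<longlonglongrightarrow> (P0::complex^'n^'n)"
  shows "(\<lambda>n. qf (P n) x) \<longlonglongrightarrow> qf P0 x"
proof -
  have e: "(\<lambda>n. P n $ i $ j) \<longlonglongrightarrow> P0 $ i $ j" for i j by (intro tendsto_vec_nth assms)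
  have "(\<lambda>n. \<Sum>i\<in>UNIV. cnj (x$i) * (\<Sum>j\<in>UNIV. P n$i$j * x$j)) \<longlonglongrightarrow> (\<Sum>i\<in>UNIV. cnj (x$i) * (\<Sum>j\<in>UNIV. P0$i$j * x$j))"
    by (intro tendsto_sum tendsto_mult_left tendsto_mult_right e)
  then show ?thesis by (simp add: qf_def cinner_def matrix_vector_mult_def)
qed

lemma psd_limit:
  assumes P: "P \<longlonglongrightarrow> (P0::complex^'n^'n)" and p: "\<And>n. psd (P n)"
  shows "psd P0"
  unfolding psd_qf
proof (intro allI conjI)
  fix x
  have t: "(\<lambda>n. qf (P n) x) \<longlonglongrightarrow> qf P0 x" by (rule qf_tendsto[OF P])
  have "(\<lambda>n. Im (qf (P n) x)) \<longlonglongrightarrow> Im (qf P0 x)" by (rule tendsto_Im[OF t])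
  moreover have "(\<lambda>n. Im (qf (P n) x)) \<longlonglongrightarrow> 0"
  proof -
    have "Im (qf (P n) x) = 0" for n using p[of n] by (simp add: psd_qf)
    then show ?thesis by simp
  qed
  ultimately show "Im (qf P0 x) = 0" by (rule LIMSEQ_unique)
  have "(\<lambda>n. Re (qf (P n) x)) \<longlonglongrightarrow> Re (qf P0 x)" by (rule tendsto_Re[OF t])
  moreover have "\<forall>n. 0 \<le> Re (qf (P n) x)" using p by (simp add: psd_qf)
  ultimately show "0 \<le> Re (qf P0 x)" by (intro LIMSEQ_le_const) auto
qed



definition Sset :: "(complex^'n^'n) set \<Rightarrow> ((complex^'n^'n) \<times> (complex^'n^'n)) set" where
  "Sset F = {(P + v, Q - v) | P Q v. psd P \<and> psd Q \<and> v \<in> span F}"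

lemma S_mem: "psd P \<Longrightarrow> psd Q \<Longrightarrow> v \<in> span F \<Longrightarrow> (P + v, Q - v) \<in> Sset F"
  unfolding Sset_def by blast

lemma S_elim: "x \<in> Sset F \<Longrightarrow> \<exists>P Q v. psd P \<and> psd Q \<and> v \<in> span F \<and> x = (P + v, Q - v)"
  unfolding Sset_def by blast

lemma S_cone: assumes x: "x \<in> Sset F" and t: "t \<ge> 0" shows "t *\<^sub>R x \<in> Sset F"
proof -
  obtain P Q v where h: "psd P" "psd Q" "v \<in> span F" "x = (P + v, Q - v)" using S_elim[OF x] by blast
  have "t *\<^sub>R x = (t *\<^sub>R P + t *\<^sub>R v, t *\<^sub>R Q - t *\<^sub>R v)" by (simp add: h(4) scaleR_add_right scaleR_diff_right)
  also have "\<dots> \<in> Sset F" by (intro S_mem psd_scaleR span_scale h t)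
  finally show ?thesis .
qed

lemma S_convex: "convex (Sset F)"
  unfolding convex_def
proof (intro ballI allI impI)
  fix x y and u w :: real
  assume x: "x \<in> Sset F" and y: "y \<in> Sset F" and u0: "0 \<le> u" and w0: "0 \<le> w" and uw1: "u + w = 1"
  obtain P1 Q1 v1 where h1: "psd P1" "psd Q1" "v1 \<in> span F" "x = (P1 + v1, Q1 - v1)" using S_elim[OF x] by blast
  obtain P2 Q2 v2 where h2: "psd P2" "psd Q2" "v2 \<in> span F" "y = (P2 + v2, Q2 - v2)" using S_elim[OF y] by blast
  have "u *\<^sub>R x + w *\<^sub>R y = ((u *\<^sub>R P1 + w *\<^sub>R P2) + (u *\<^sub>R v1 + w *\<^sub>R v2), (u *\<^sub>R Q1 + w *\<^sub>R Q2) - (u *\<^sub>R v1 + w *\<^sub>R v2))"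
    by (simp add: h1(4) h2(4) algebra_simps)
  also have "\<dots> \<in> Sset F"
    by (intro S_mem psd_add psd_scaleR span_add span_scale h1 h2 u0 w0)
  finally show "u *\<^sub>R x + w *\<^sub>R y \<in> Sset F" .
qed

lemma Re_trace_le_norm: "Re (trace (M::complex^'n^'n)) \<le> real CARD('n) * norm M"
proof -
  have "Re (trace M) = (\<Sum>i\<in>UNIV. Re (M$i$i))" by (simp add: trace_def Re_sum)
  also have "\<dots> \<le> (\<Sum>i\<in>(UNIV::'n set). norm M)"
  proof (rule sum_mono)
    fix i
    have "Re (M$i$i) \<le> norm (M$i$i)" by (rule complex_Re_le_cmod)
    also have "\<dots> \<le> norm (M$i)" by (rule Finite_Cartesian_Product.norm_nth_le)
    also have "\<dots> \<le> norm M" by (rule Finite_Cartesian_Product.norm_nth_le)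
    finally show "Re (M$i$i) \<le> norm M" .
  qed
  also have "\<dots> = real CARD('n) * norm M" by simp
  finally show ?thesis .
qed

lemma S_closed: "closed (Sset (F::(complex^'n^'n) set))"
  unfolding closed_sequential_limits
proof (intro allI impI, elim conjE)
  fix x l
  assume xS: "\<forall>n. x n \<in> Sset F" and xl: "x \<longlonglongrightarrow> l"
  have "\<forall>n. \<exists>P. \<exists>Q. \<exists>v. psd P \<and> psd Q \<and> v \<in> span F \<and> x n = (P + v, Q - v)"
  proof
    fix n
    have "x n \<in> Sset F" using xS by (rule spec)
    then show "\<exists>P. \<exists>Q. \<exists>v. psd P \<and> psd Q \<and> v \<in> span F \<and> x n = (P + v, Q - v)" by (rule S_elim)
  qed
  then have "\<exists>P. \<forall>n. \<exists>Q. \<exists>v. psd (P n) \<and> psd Q \<and> v \<in> span F \<and> x n = (P n + v, Q - v)" by (rule choice)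
  then obtain P where "\<forall>n. \<exists>Q. \<exists>v. psd (P n) \<and> psd Q \<and> v \<in> span F \<and> x n = (P n + v, Q - v)" by (elim exE)
  then have "\<exists>Q. \<forall>n. \<exists>v. psd (P n) \<and> psd (Q n) \<and> v \<in> span F \<and> x n = (P n + v, Q n - v)" by (rule choice)
  then obtain Q where "\<forall>n. \<exists>v. psd (P n) \<and> psd (Q n) \<and> v \<in> span F \<and> x n = (P n + v, Q n - v)" by (elim exE)
  then have "\<exists>v. \<forall>n. psd (P n) \<and> psd (Q n) \<and> v n \<in> span F \<and> x n = (P n + v n, Q n - v n)" by (rule choice)
  then obtain v where h: "\<forall>n. psd (P n) \<and> psd (Q n) \<and> v n \<in> span F \<and> x n = (P n + v n, Q n - v n)" by (elim exE)
  have pP: "psd (P n)" and pQ: "psd (Q n)" and vF: "v n \<in> span F" and xe: "x n = (P n + v n, Q n - v n)" for n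
    using h by auto
  define C where "C = real CARD('n)"
  have C0: "C \<ge> 0" by (simp add: C_def)
  obtain K where K: "\<forall>y\<in>range x. norm y \<le> K" using convergent_imp_bounded[OF xl] unfolding bounded_iff by blast
  have Kx: "norm (x n) \<le> K" for n using K by simp
  have nf: "norm (fst (x n)) \<le> K" for n using Kx[of n] norm_fst_le[of "fst (x n)" "snd (x n)"] by simp
  have ns: "norm (snd (x n)) \<le> K" for n using Kx[of n] norm_snd_le[of "snd (x n)" "fst (x n)"] by simp
  have sum_eq: "fst (x n) + snd (x n) = P n + Q n" for n by (simp add: xe)
  have trPQ: "Re (trace (P n + Q n)) \<le> C * (2 * K)" for n
  proof -
    have "Re (trace (P n + Q n)) \<le> C * norm (P n + Q n)" unfolding C_def by (rule Re_trace_le_norm)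
    also have "norm (P n + Q n) \<le> 2 * K" using nf[of n] ns[of n] norm_triangle_ineq[of "fst (x n)" "snd (x n)"]
      by (simp add: sum_eq[symmetric])
    finally show ?thesis using C0 by (simp add: mult_left_mono)
  qed
  have trP: "Re (trace (P n)) \<le> C * (2 * K)" for n
    using trPQ[of n] psd_trace_Re[OF pQ[of n]] by (simp add: trace_add')
  have trQ: "Re (trace (Q n)) \<le> C * (2 * K)" for n
    using trPQ[of n] psd_trace_Re[OF pP[of n]] by (simp add: trace_add')
  define B where "B = C^2 * (C * (2 * K))"
  have nP: "norm (P n) \<le> B" for n
  proof -
    have "norm (P n) \<le> C^2 * Re (trace (P n))" unfolding C_def by (rule psd_norm_bound[OF pP])
    also have "\<dots> \<le> B" unfolding B_def using trP[of n] C0 by (simp add: mult_left_mono)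
    finally show ?thesis .
  qed
  have nQ: "norm (Q n) \<le> B" for n
  proof -
    have "norm (Q n) \<le> C^2 * Re (trace (Q n))" unfolding C_def by (rule psd_norm_bound[OF pQ])
    also have "\<dots> \<le> B" unfolding B_def using trQ[of n] C0 by (simp add: mult_left_mono)
    finally show ?thesis .
  qed
  have nv: "norm (v n) \<le> K + B" for n
  proof -
    have "v n = fst (x n) - P n" by (simp add: xe)
    then have "norm (v n) \<le> norm (fst (x n)) + norm (P n)" by (simp add: norm_triangle_ineq4)
    then show ?thesis using nf[of n] nP[of n] by simp
  qed
  define w where "w n = (P n, Q n, v n)" for n
  have "bounded (range w)"
    unfolding bounded_iff
  proof (intro exI ballI)
    fix y assume "y \<in> range w"
    then obtain n where y: "y = w n" by blast
    have "norm y \<le> norm (P n) + norm (Q n, v n)" by (simp add: y w_def norm_Pair_le)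
    also have "norm (Q n, v n) \<le> norm (Q n) + norm (v n)" by (rule norm_Pair_le)
    finally show "norm y \<le> B + (B + (K + B))" using nP[of n] nQ[of n] nv[of n] by simp
  qed
  then obtain l0 r where r: "strict_mono r" and wl: "(w \<circ> r) \<longlonglongrightarrow> l0"
    using bounded_imp_convergent_subsequence by blast
  obtain P0 Q0 v0 where l0: "l0 = (P0, Q0, v0)" by (cases l0) auto
  have tP: "(\<lambda>n. P (r n)) \<longlonglongrightarrow> P0" using tendsto_fst[OF wl] by (simp add: l0 w_def o_def)
  have tQ: "(\<lambda>n. Q (r n)) \<longlonglongrightarrow> Q0" using tendsto_fst[OF tendsto_snd[OF wl]] by (simp add: l0 w_def o_def)
  have tv: "(\<lambda>n. v (r n)) \<longlonglongrightarrow> v0" using tendsto_snd[OF tendsto_snd[OF wl]] by (simp add: l0 w_def o_def)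
  have P0: "psd P0" by (rule psd_limit[OF tP]) (rule pP)
  have Q0: "psd Q0" by (rule psd_limit[OF tQ]) (rule pQ)
  have v0: "v0 \<in> span F"
  proof -
    have cl: "closed (span F)" by (intro closed_subspace subspace_span)
    have "(\<forall>n. v (r n) \<in> span F) \<and> (\<lambda>n. v (r n)) \<longlonglongrightarrow> v0" using vF tv by simp
    then show ?thesis by (rule closed_sequential_limits[THEN iffD1, OF cl, rule_format])
  qed
  have "(x \<circ> r) \<longlonglongrightarrow> l" by (rule LIMSEQ_subseq_LIMSEQ[OF xl r])
  moreover have "(x \<circ> r) \<longlonglongrightarrow> (P0 + v0, Q0 - v0)"
  proof -
    have "(\<lambda>n. (P (r n) + v (r n), Q (r n) - v (r n))) \<longlonglongrightarrow> (P0 + v0, Q0 - v0)"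
      by (intro tendsto_Pair tendsto_add tendsto_diff tP tQ tv)
    then show ?thesis by (simp add: o_def xe)
  qed
  ultimately have "l = (P0 + v0, Q0 - v0)" by (rule LIMSEQ_unique)
  then show "l \<in> Sset F" using S_mem[OF P0 Q0 v0] by simp
qed



lemma dualD:
  fixes F :: "(complex^'a^'a) set" and \<rho> :: "complex^'a^'a"
  assumes aff: "affine_free_set F" and r: "\<rho> \<in> density_ops" and Om: "OmegaF F \<rho> > ereal \<pi>"
  shows "\<exists>A B. psd A \<and> psd B \<and> (\<forall>\<sigma>\<in>F. trace (A ** \<sigma>) = trace (B ** \<sigma>)) \<and>
           Re (trace (A ** \<rho>)) > \<pi> * Re (trace (B ** \<rho>))"
proof -
  have dF: "F \<subseteq> density_ops" using aff by (simp add: affine_free_set_def)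
  have pr: "psd \<rho>" and tr: "trace \<rho> = 1" using r by (auto simp: dens)
  define z where "z = (- \<rho>, \<pi> *\<^sub>R \<rho>)"
  have zS: "z \<notin> Sset F"
  proof
    assume "z \<in> Sset F"
    then obtain P Q v where pP: "psd P" and pQ: "psd Q" and vF: "v \<in> span F" and ze: "z = (P + v, Q - v)"
      using S_elim by blast
    have e1: "- \<rho> = P + v" and e2: "\<pi> *\<^sub>R \<rho> = Q - v" using ze by (auto simp: z_def)
    define s where "s = \<rho> + P"
    have sv: "s = - v" using e1 unfolding s_def by (simp add: algebra_simps) (metis add.commute add_diff_cancel_left' diff_minus_eq_add minus_add_distrib)
    have sF: "s \<in> span F" using vF by (simp add: sv span_neg)
    have ps: "psd s" unfolding s_def by (intro psd_add pr pP)
    define t where "t = Re (trace s)"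
    have t1: "t \<ge> 1" using psd_trace_Re[OF pP] tr by (simp add: t_def s_def trace_add')
    have ts: "trace s = of_real t" using psd_trace_real[OF ps] by (simp add: t_def)
    define \<sigma> where "\<sigma> = (1/t) *\<^sub>R s"
    have s\<sigma>: "s = t *\<^sub>R \<sigma>" using t1 by (simp add: \<sigma>_def)
    have \<sigma>d: "\<sigma> \<in> density_ops"
      unfolding density_ops_def using t1 ps by (simp add: \<sigma>_def psd_scaleR trace_scaleR' ts)
    have \<sigma>F: "\<sigma> \<in> F" by (rule F_char[OF aff _ \<sigma>d]) (simp add: \<sigma>_def span_scale sF)
    have l1: "loewner_le \<rho> (t *\<^sub>R \<sigma>)" unfolding loewner_le_def s\<sigma>[symmetric] s_def by (simp add: pP)
    have Qe: "\<pi> *\<^sub>R \<rho> - s = Q" using e2 sv by (simp add: algebra_simps)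
    have "(\<pi> / t) *\<^sub>R \<rho> - \<sigma> = (1/t) *\<^sub>R (\<pi> *\<^sub>R \<rho> - s)" by (simp add: \<sigma>_def algebra_simps)
    then have l2: "loewner_le \<sigma> ((\<pi> / t) *\<^sub>R \<rho>)" unfolding loewner_le_def Qe
      using t1 pQ by (simp add: psd_scaleR)
    have "OmegaF F \<rho> \<le> ereal (t * (\<pi> / t))" by (rule Omega_le[OF dF \<sigma>F r l1 l2])
    also have "t * (\<pi> / t) = \<pi>" using t1 by simp
    finally show False using Om by simp
  qed
  obtain a b where az: "a \<bullet> z < b" and aS: "\<forall>x\<in>Sset F. b < a \<bullet> x"
    using separating_hyperplane_closed_point[OF S_convex S_closed zS] by blast
  obtain Y Z where a: "a = (Y, Z)" by (cases a) auto
  have zero: "(0, 0) \<in> Sset F" using S_mem[OF psd_zero psd_zero span_0[of F]] by simp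
  have "b < a \<bullet> (0, 0)" using aS zero by blast
  then have b0: "b < 0" by (simp add: a)
  have nonneg: "a \<bullet> x \<ge> 0" if x: "x \<in> Sset F" for x
  proof (rule ccontr)
    assume "\<not> a \<bullet> x \<ge> 0"
    then have neg: "a \<bullet> x < 0" by simp
    define t where "t = b / (a \<bullet> x)"
    have t0: "t \<ge> 0" using neg b0 by (simp add: t_def divide_nonpos_neg)
    have "b < a \<bullet> (t *\<^sub>R x)" using aS S_cone[OF x t0] by blast
    also have "a \<bullet> (t *\<^sub>R x) = b" using neg by (simp add: t_def)
    finally show False by simp
  qed
  have YP: "Y \<bullet> P \<ge> 0" if "psd P" for P
  proof -
    have "(P + 0, 0 - 0) \<in> Sset F" by (intro S_mem that psd_zero span_0)
    then show ?thesis using nonneg by (fastforce simp: a)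
  qed
  have ZQ: "Z \<bullet> Q \<ge> 0" if "psd Q" for Q
  proof -
    have "(0 + 0, Q - 0) \<in> Sset F" by (intro S_mem that psd_zero span_0)
    then show ?thesis using nonneg by (fastforce simp: a)
  qed
  have YZ: "Y \<bullet> v = Z \<bullet> v" if v: "v \<in> span F" for v
  proof -
    have "(0 + v, 0 - v) \<in> Sset F" by (intro S_mem v psd_zero)
    then have "a \<bullet> (0 + v, 0 - v) \<ge> 0" by (rule nonneg)
    then have g1: "Y \<bullet> v - Z \<bullet> v \<ge> 0" by (simp add: a)
    have "(0 + - v, 0 - - v) \<in> Sset F" by (intro S_mem span_neg v psd_zero)
    then have "a \<bullet> (0 + - v, 0 - - v) \<ge> 0" by (rule nonneg)
    then have g2: "Z \<bullet> v - Y \<bullet> v \<ge> 0" by (simp add: a)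
    from g1 g2 show ?thesis by simp
  qed
  have Yr: "Y \<bullet> \<rho> > \<pi> * (Z \<bullet> \<rho>)"
  proof -
    have "a \<bullet> z = - (Y \<bullet> \<rho>) + \<pi> * (Z \<bullet> \<rho>)" by (simp add: a z_def)
    then show ?thesis using az b0 by simp
  qed
  define A where "A = hp Y"
  define B where "B = hp Z"
  have pA: "psd A" unfolding A_def by (rule psd_hp) (rule YP)
  have pB: "psd B" unfolding B_def by (rule psd_hp) (rule ZQ)
  have eqF: "trace (A ** \<sigma>) = trace (B ** \<sigma>)" if s: "\<sigma> \<in> F" for \<sigma>
  proof -
    have "\<sigma> \<in> density_ops" using s dF by blast
    then have "psd \<sigma>" by (simp add: density_ops_def)
    then have hs: "herm \<sigma>" by (rule psd_herm)
    have "\<sigma> \<in> span F" using s by (rule span_base)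
    then show ?thesis using YZ hs by (simp add: A_def B_def hp_trace)
  qed
  have hr: "herm \<rho>" using pr psd_herm by blast
  have "Re (trace (A ** \<rho>)) > \<pi> * Re (trace (B ** \<rho>))"
    using Yr by (simp add: A_def B_def hp_trace[OF hr])
  then show ?thesis using pA pB eqF by blast
qed



lemma combo: "x *\<^sub>R (m *\<^sub>R R - S) + y *\<^sub>R (l *\<^sub>R S - R) = (x*m - y) *\<^sub>R R + (y*l - x) *\<^sub>R (S::complex^'n^'n)"
  by (simp add: algebra_simps)

lemma real_of: "Im z = 0 \<Longrightarrow> z = of_real (Re z)"
  by (simp add: complex_eq_iff)

lemma reach_M:
  fixes F :: "(complex^'a^'a) set" and F' :: "(complex^'b^'b) set"
  assumes aff: "affine_free_set F" and aff': "affine_free_set F'"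
    and r: "\<rho> \<in> density_ops" and r2: "\<rho>'' \<in> density_ops" and s': "\<sigma>' \<in> F'"
    and l1: "loewner_le \<rho>'' (l *\<^sub>R \<sigma>')" and l2: "loewner_le \<sigma>' (m *\<^sub>R \<rho>'')"
    and Om: "OmegaF F \<rho> > ereal (l * m)"
  shows "reach F F' \<rho> \<rho>''"
proof -
  have dF: "F \<subseteq> density_ops" using aff by (simp add: affine_free_set_def)
  have dF': "F' \<subseteq> density_ops" using aff' by (simp add: affine_free_set_def)
  have sd: "\<sigma>' \<in> density_ops" using s' dF' by blast
  have pr: "psd \<rho>" and tr: "trace \<rho> = 1" using r by (auto simp: dens)
  have pr2: "psd \<rho>''" and tr2: "trace \<rho>'' = 1" using r2 by (auto simp: dens)
  have ps: "psd \<sigma>'" and ts: "trace \<sigma>' = 1" using sd by (auto simp: dens)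
  have pT2: "psd (l *\<^sub>R \<sigma>' - \<rho>'')" using l1 by (simp add: loewner_le_def)
  have pT1: "psd (m *\<^sub>R \<rho>'' - \<sigma>')" using l2 by (simp add: loewner_le_def)
  have lg: "l \<ge> 1" by (rule lam_ge1[OF r2 sd pT2])
  have mg: "m \<ge> 1" by (rule lam_ge1[OF sd r2 pT1])
  show ?thesis
  proof (cases "l * m \<le> 1")
    case True
    have l1': "l = 1"
    proof -
      have "l * 1 \<le> l * m" using lg mg by (intro mult_left_mono) auto
      then have "l \<le> l * m" by simp
      then show ?thesis using True lg by linarith
    qed
    have "psd (\<sigma>' - \<rho>'')" using pT2 by (simp add: l1')
    moreover have "trace (\<sigma>' - \<rho>'') = 0" by (simp add: trace_diff' ts tr2)
    ultimately have "\<sigma>' - \<rho>'' = 0" by (rule psd_trace0)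
    then have "\<rho>'' \<in> F'" using s' by simp
    then show ?thesis by (rule reach_free[OF dF dF' r])
  next
    case False
    define \<pi> where "\<pi> = l * m"
    have pi1: "\<pi> > 1" using False by (simp add: \<pi>_def)
    obtain A B where pA: "psd A" and pB: "psd B" and eqF: "\<forall>\<sigma>\<in>F. trace (A ** \<sigma>) = trace (B ** \<sigma>)"
      and gt: "Re (trace (A ** \<rho>)) > \<pi> * Re (trace (B ** \<rho>))"
      using dualD[OF aff r Om] unfolding \<pi>_def by blast
    define a where "a = Re (trace (A ** \<rho>))"
    define b where "b = Re (trace (B ** \<rho>))"
    have b0: "b \<ge> 0" unfolding b_def by (rule tmm_psd(2)[OF pB pr])
    have ab: "a > \<pi> * b" using gt by (simp add: a_def b_def)
    define s where "s = (a - \<pi> * b) / (\<pi> - 1)"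
    have s0: "s > 0" using ab pi1 by (simp add: s_def)
    have as: "a + s = \<pi> * (b + s)"
    proof -
      have "s * (\<pi> - 1) = a - \<pi> * b" using pi1 by (simp add: s_def)
      then show ?thesis by (simp add: algebra_simps)
    qed
    define A' where "A' = A + s *\<^sub>R mat 1"
    define B' where "B' = B + s *\<^sub>R mat 1"
    have pA': "psd A'" unfolding A'_def using s0 by (intro psd_add pA psd_scaleR psd_mat1) simp
    have pB': "psd B'" unfolding B'_def using s0 by (intro psd_add pB psd_scaleR psd_mat1) simp
    have eqF': "trace (A' ** \<sigma>) = trace (B' ** \<sigma>)" if "\<sigma> \<in> F" for \<sigma>
      using eqF that by (simp add: A'_def B'_def tmm_add_left tmm_scaleR_left)
    have trA'r: "trace (A' ** \<rho>) = of_real (a + s)"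
    proof -
      have "trace (A' ** \<rho>) = trace (A ** \<rho>) + of_real s" by (simp add: A'_def tmm_add_left tmm_scaleR_left tr)
      also have "trace (A ** \<rho>) = of_real a" unfolding a_def by (rule real_of[OF tmm_psd(1)[OF pA pr]])
      finally show ?thesis by simp
    qed
    have trB'r: "trace (B' ** \<rho>) = of_real (b + s)"
    proof -
      have "trace (B' ** \<rho>) = trace (B ** \<rho>) + of_real s" by (simp add: B'_def tmm_add_left tmm_scaleR_left tr)
      also have "trace (B ** \<rho>) = of_real b" unfolding b_def by (rule real_of[OF tmm_psd(1)[OF pB pr]])
      finally show ?thesis by simp
    qed
    define T1 where "T1 = m *\<^sub>R \<rho>'' - \<sigma>'"
    define T2 where "T2 = l *\<^sub>R \<sigma>' - \<rho>''"
    have pT1': "psd T1" using pT1 by (simp add: T1_def)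
    have pT2': "psd T2" using pT2 by (simp add: T2_def)
    define D where "D = Re (trace A') / m * Re (trace T1) + Re (trace B') * Re (trace T2)"
    have D0: "D \<ge> 0" unfolding D_def using psd_trace_Re[OF pA'] psd_trace_Re[OF pB'] psd_trace_Re[OF pT1'] psd_trace_Re[OF pT2'] mg
      by (intro add_nonneg_nonneg mult_nonneg_nonneg divide_nonneg_pos) auto
    define c where "c = 1 / (1 + D)"
    have c0: "c > 0" using D0 by (simp add: c_def)
    have cD: "c * D \<le> 1" using D0 by (simp add: c_def)
    define A1 where "A1 = (c / m) *\<^sub>R A'"
    define A2 where "A2 = c *\<^sub>R B'"
    have pA1: "psd A1" unfolding A1_def using c0 mg by (intro psd_scaleR pA') simp
    have pA2: "psd A2" unfolding A2_def using c0 by (intro psd_scaleR pB') simp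
    define E where "E X = cscale (trace (A1 ** X)) T1 + cscale (trace (A2 ** X)) T2" for X :: "complex^'a^'a"
    have cp: "completely_positive E"
      unfolding E_def by (intro cp_add cp_mp pA1 pA2 pT1' pT2')
    have Eform: "E X = (x * m - y) *\<^sub>R \<rho>'' + (y * l - x) *\<^sub>R \<sigma>'"
      if "trace (A1 ** X) = of_real x" "trace (A2 ** X) = of_real y" for X x y
      using that by (simp add: E_def cscale_of_real T1_def T2_def combo)
    have tn: "Re (trace (E X)) \<le> Re (trace X)" if pX: "psd X" for X
    proof -
      have r1: "trace (A1 ** X) = of_real (Re (trace (A1 ** X)))" by (rule real_of[OF tmm_psd(1)[OF pA1 pX]])
      have r2: "trace (A2 ** X) = of_real (Re (trace (A2 ** X)))" by (rule real_of[OF tmm_psd(1)[OF pA2 pX]])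
      have rt1: "trace T1 = of_real (Re (trace T1))" by (rule psd_trace_real[OF pT1'])
      have rt2: "trace T2 = of_real (Re (trace T2))" by (rule psd_trace_real[OF pT2'])
      have "Re (trace (E X)) = Re (trace (A1 ** X)) * Re (trace T1) + Re (trace (A2 ** X)) * Re (trace T2)"
        by (simp add: E_def trace_add' trace_cscale tmm_psd(1)[OF pA1 pX] tmm_psd(1)[OF pA2 pX]
              psd_trace_Im[OF pT1'] psd_trace_Im[OF pT2'])
      also have "\<dots> \<le> (Re (trace A1) * Re (trace X)) * Re (trace T1) + (Re (trace A2) * Re (trace X)) * Re (trace T2)"
        using tmm_psd(3)[OF pA1 pX] tmm_psd(3)[OF pA2 pX] psd_trace_Re[OF pT1'] psd_trace_Re[OF pT2']
        by (intro add_mono mult_right_mono) auto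
      also have "\<dots> = (c * D) * Re (trace X)"
        by (simp add: D_def A1_def A2_def trace_scaleR' algebra_simps)
      also have "\<dots> \<le> 1 * Re (trace X)" using cD psd_trace_Re[OF pX] by (intro mult_right_mono) auto
      finally show ?thesis by simp
    qed
    have fr: "\<exists>\<sigma>''\<in>F'. \<exists>p. p \<ge> 0 \<and> E \<sigma> = p *\<^sub>R \<sigma>''" if sF: "\<sigma> \<in> F" for \<sigma>
    proof -
      have psig: "psd \<sigma>" using sF dF by (auto simp: dens)
      define \<beta> where "\<beta> = Re (trace (B' ** \<sigma>))"
      have \<beta>0: "\<beta> \<ge> 0" unfolding \<beta>_def by (rule tmm_psd(2)[OF pB' psig])
      have tB: "trace (B' ** \<sigma>) = of_real \<beta>" unfolding \<beta>_def by (rule real_of[OF tmm_psd(1)[OF pB' psig]])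
      have tA: "trace (A' ** \<sigma>) = of_real \<beta>" using eqF'[OF sF] tB by simp
      have e1: "trace (A1 ** \<sigma>) = of_real (c / m * \<beta>)" by (simp add: A1_def tmm_scaleR_left tA)
      have e2: "trace (A2 ** \<sigma>) = of_real (c * \<beta>)" by (simp add: A2_def tmm_scaleR_left tB)
      have "E \<sigma> = (c / m * \<beta> * m - c * \<beta>) *\<^sub>R \<rho>'' + (c * \<beta> * l - c / m * \<beta>) *\<^sub>R \<sigma>'"
        by (rule Eform[OF e1 e2])
      also have "c / m * \<beta> * m - c * \<beta> = 0" using mg by simp
      finally have "E \<sigma> = (c * \<beta> * l - c / m * \<beta>) *\<^sub>R \<sigma>'" by simp
      moreover have "c * \<beta> * l - c / m * \<beta> \<ge> 0"
      proof -
        have "1 / m \<le> 1" using mg by simp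
        then have "1 / m \<le> l" using lg by linarith
        then have "c * \<beta> * (1 / m) \<le> c * \<beta> * l" using c0 \<beta>0 by (intro mult_left_mono) auto
        then show ?thesis by simp
      qed
      ultimately show ?thesis using s' by blast
    qed
    have Efree: "E \<in> free_ops F F'" by (rule free_ops_intro[OF cp tn fr dF dF'])
    have e1: "trace (A1 ** \<rho>) = of_real (c / m * (a + s))" by (simp add: A1_def tmm_scaleR_left trA'r)
    have e2: "trace (A2 ** \<rho>) = of_real (c * (b + s))" by (simp add: A2_def tmm_scaleR_left trB'r)
    have "E \<rho> = (c / m * (a + s) * m - c * (b + s)) *\<^sub>R \<rho>'' + (c * (b + s) * l - c / m * (a + s)) *\<^sub>R \<sigma>'"
      by (rule Eform[OF e1 e2])
    also have "c * (b + s) * l - c / m * (a + s) = 0"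
      using mg by (simp add: as \<pi>_def field_simps)
    also have "c / m * (a + s) * m - c * (b + s) = c * ((a + s) - (b + s))" using mg by (simp add: field_simps)
    finally have Er: "E \<rho> = (c * ((a + s) - (b + s))) *\<^sub>R \<rho>''" by simp
    have kp: "c * ((a + s) - (b + s)) > 0"
    proof -
      have bs: "b + s > 0" using b0 s0 by simp
      have "1 * (b + s) < \<pi> * (b + s)" using pi1 bs by (intro mult_strict_right_mono) auto
      then have h: "b + s < \<pi> * (b + s)" by simp
      define u where "u = \<pi> * (b + s)"
      have "(a + s) - (b + s) = u - (b + s)" using as by (simp add: u_def)
      moreover have "b + s < u" using h by (simp add: u_def)
      ultimately have "(a + s) - (b + s) > 0" by linarith
      then show ?thesis using c0 by simp
    qed
    show ?thesis by (rule reach_intro[OF Efree Er kp r2])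
  qed
qed



lemma inner_cinner: "(z::complex^'n) \<bullet> w = Re (cinner z w)"
  by (simp add: inner_vec_def inner_complex_def cinner_def Re_sum)

lemma range_herm:
  assumes h: "herm (S::complex^'n^'n)" and orth: "\<And>x. S *v x = 0 \<Longrightarrow> cinner t x = 0"
  shows "\<exists>y. t = S *v y"
proof -
  define U where "U = range (\<lambda>y. S *v y)"
  have sU: "subspace U" unfolding subspace_def U_def
  proof (intro conjI ballI allI)
    show "0 \<in> range (\<lambda>y. S *v y)" by (rule range_eqI[of _ _ 0]) (simp add: matrix_vector_mult_def vec_eq_iff)
  next
    fix a b assume "a \<in> range (\<lambda>y. S *v y)" "b \<in> range (\<lambda>y. S *v y)"
    then obtain ya yb where "a = S *v ya" "b = S *v yb" by blast
    then have "a + b = S *v (ya + yb)" by (simp add: mv_vadd)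
    then show "a + b \<in> range (\<lambda>y. S *v y)" by blast
  next
    fix c :: real and a assume "a \<in> range (\<lambda>y. S *v y)"
    then obtain ya where "a = S *v ya" by blast
    then have "c *\<^sub>R a = S *v (c *\<^sub>R ya)" by (simp add: scaleR_smult mv_smult)
    then show "c *\<^sub>R a \<in> range (\<lambda>y. S *v y)" by blast
  qed
  have spU: "span U = U" using sU by (simp add: span_eq_iff)
  obtain u z where u: "u \<in> span U" and zo: "\<And>w. w \<in> span U \<Longrightarrow> orthogonal z w" and tuz: "t = u + z"
    using orthogonal_subspace_decomp_exists[of U t] by blast
  have inU: "S *v w \<in> span U" for w
  proof -
    have "S *v w \<in> U" unfolding U_def by blast
    then show ?thesis by (simp add: spU)
  qed
  have zU: "cinner z (S *v y) = 0" for y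
  proof -
    have a1: "Re (cinner z (S *v y)) = 0"
      using zo[OF inU[of y]] by (simp add: orthogonal_def inner_cinner)
    have "Re (cinner z (S *v (\<i> *s y))) = 0"
      using zo[OF inU[of "\<i> *s y"]] by (simp add: orthogonal_def inner_cinner)
    then have a2: "Im (cinner z (S *v y)) = 0" by (simp add: mv_smult cinner_smult_right)
    show ?thesis using a1 a2 by (simp add: complex_eq_iff)
  qed
  have Sz: "S *v z = 0"
  proof -
    have "cinner (S *v z) (S *v z) = cnj (cinner z (S *v (S *v z)))" by (rule herm_form[OF h])
    then show ?thesis using zU by (simp add: cinner_self_eq0)
  qed
  have "u \<in> U" using u spU by simp
  then obtain y0 where uy: "u = S *v y0" unfolding U_def by blast
  have "cinner t z = 0" by (rule orth[OF Sz])
  moreover have "cinner u z = 0" using zU[of y0] by (simp add: uy cinner_commute[of "S *v y0" z])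
  ultimately have "cinner z z = 0" by (simp add: tuz cinner_add_left)
  then have "z = 0" by (simp add: cinner_self_eq0)
  then show ?thesis using tuz uy by auto
qed

lemma psd_sum: "(\<And>k. k \<in> K \<Longrightarrow> psd (M k)) \<Longrightarrow> psd (\<Sum>k\<in>K. (M k::complex^'n^'n))"
proof (induction K rule: infinite_finite_induct)
  case (infinite A) then show ?case by (simp add: psd_zero)
next
  case empty then show ?case by (simp add: psd_zero)
next
  case (insert x F) then show ?case by (simp add: psd_add)
qed

lemma kernel_dom:
  assumes pS: "psd (S::complex^'n^'n)" and pR: "psd R" and ker: "\<And>x. S *v x = 0 \<Longrightarrow> R *v x = 0"
  shows "\<exists>lam. psd (lam *\<^sub>R S - R)"
proof -
  obtain m :: nat and ts where R: "R = (\<Sum>k<m. outer (ts k))" using psd_decomp[OF pR] by blast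
  have hS: "herm S" using pS psd_herm by blast
  have orth: "cinner (ts k) x = 0" if "S *v x = 0" "k < m" for k x
  proof -
    have "R *v x = 0" using ker that(1) .
    then have "Re (qf R x) = 0" by (simp add: qf_def)
    then have "(\<Sum>k<m. (cmod (cinner (ts k) x))^2) = 0" by (simp add: R qf_sum qf_outer Re_sum)
    then have "\<forall>k\<in>{..<m}. (cmod (cinner (ts k) x))^2 = 0" by (subst sum_nonneg_eq_0_iff[symmetric]) auto
    then show ?thesis using that(2) by simp
  qed
  have "\<forall>k. \<exists>y. k < m \<longrightarrow> ts k = S *v y"
  proof
    fix k show "\<exists>y. k < m \<longrightarrow> ts k = S *v y"
    proof (cases "k < m")
      case True then show ?thesis using range_herm[OF hS, of "ts k"] orth by blast
    qed auto
  qed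
  then obtain y where y: "\<And>k. k < m \<Longrightarrow> ts k = S *v y k" by (metis choice)
  define lam where "lam = (\<Sum>k<m. Re (qf S (y k)))"
  have "psd (lam *\<^sub>R S - R)"
    unfolding psd_iff
  proof (intro conjI allI)
    show "herm (lam *\<^sub>R S - R)" using hS psd_herm[OF pR] by (intro herm_diff herm_scaleR)
  next
    fix x
    have bnd: "(cmod (cinner (ts k) x))^2 \<le> Re (qf S x) * Re (qf S (y k))" if k: "k < m" for k
    proof -
      have "cmod (cinner (ts k) x) = cmod (cinner x (S *v y k))"
        by (simp add: y[OF k] cinner_commute[of "S *v y k" x])
      then show ?thesis using psd_CS[OF pS, of x "y k"] by simp
    qed
    have "Re (qf R x) = (\<Sum>k<m. (cmod (cinner (ts k) x))^2)" by (simp add: R qf_sum qf_outer Re_sum)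
    also have "\<dots> \<le> (\<Sum>k<m. Re (qf S x) * Re (qf S (y k)))" by (rule sum_mono) (simp add: bnd)
    also have "\<dots> = lam * Re (qf S x)" by (simp add: lam_def sum_distrib_left mult.commute)
    finally show "0 \<le> Re (qf (lam *\<^sub>R S - R) x)" by (simp add: qf_diff qf_scaleR)
  qed
  then show ?thesis by blast
qed

lemma mv_zero_subspace: "subspace {M::complex^'n^'n. M *v x = 0}"
  unfolding subspace_def by (auto simp: mv_add mv_scaleR)

lemma kill_vec:
  fixes F :: "(complex^'a^'a) set"
  assumes aff: "affine_free_set F" and r: "\<rho> \<in> density_ops" and R: "RF F \<rho> = \<infinity>"
  shows "\<exists>x. (\<forall>\<sigma>\<in>F. \<sigma> *v x = 0) \<and> Re (qf \<rho> x) > 0"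
proof -
  have dF: "F \<subseteq> density_ops" and ne: "F \<noteq> {}" and cF: "convex F"
    using aff by (auto simp: affine_free_set_def)
  obtain Bs where BF: "Bs \<subseteq> F" and ind: "independent Bs" and Fsp: "F \<subseteq> span Bs"
    using maximal_independent_subset[of F] by blast
  have fin: "finite Bs" using independent_bound[OF ind] by blast
  have Bne: "Bs \<noteq> {}"
  proof
    assume "Bs = {}"
    then have "F \<subseteq> {0}" using Fsp by simp
    then obtain \<sigma> where "\<sigma> \<in> F" "\<sigma> = 0" using ne by blast
    then have "trace (0::complex^'a^'a) = 1" using dF by (auto simp: dens)
    then show False by (simp add: trace_zero')
  qed
  define n where "n = card Bs"
  have n0: "n > 0" using fin Bne by (simp add: n_def card_gt_0_iff)
  define \<sigma>s where "\<sigma>s = (\<Sum>b\<in>Bs. (1 / real n) *\<^sub>R b)"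
  have \<sigma>sF: "\<sigma>s \<in> F" unfolding \<sigma>s_def
    by (rule convex_sum[OF fin cF]) (use BF n0 in \<open>auto simp: n_def\<close>)
  have psB: "psd b" if "b \<in> Bs" for b using that BF dF by (auto simp: dens)
  have ps: "psd \<sigma>s" using \<sigma>sF dF by (auto simp: dens)
  have kerB: "b *v x = 0" if x: "\<sigma>s *v x = 0" and b: "b \<in> Bs" for x b
  proof -
    have "Re (qf \<sigma>s x) = 0" using x by (simp add: qf_def)
    then have "(\<Sum>b\<in>Bs. (1 / real n) * Re (qf b x)) = 0" by (simp add: \<sigma>s_def qf_sum qf_scaleR Re_sum)
    then have "\<forall>b\<in>Bs. (1 / real n) * Re (qf b x) = 0"
      using psB by (subst sum_nonneg_eq_0_iff[symmetric]) (auto simp: fin psd_qf)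
    then have "Re (qf b x) = 0" using b n0 by simp
    then show ?thesis by (rule psd_qf_zero[OF psB[OF b]])
  qed
  have kerF: "\<sigma> *v x = 0" if x: "\<sigma>s *v x = 0" and s: "\<sigma> \<in> F" for x \<sigma>
  proof -
    have "\<sigma> \<in> span Bs" using s Fsp by blast
    then show ?thesis
      by (rule span_induct[where P="\<lambda>M. M *v x = 0"]) (auto intro: mv_zero_subspace kerB[OF x])
  qed
  have pr: "psd \<rho>" using r by (simp add: dens)
  have "\<exists>x. \<sigma>s *v x = 0 \<and> \<rho> *v x \<noteq> 0"
  proof (rule ccontr)
    assume "\<not> ?thesis"
    then have "\<And>x. \<sigma>s *v x = 0 \<Longrightarrow> \<rho> *v x = 0" by blast
    then have "\<exists>lam. psd (lam *\<^sub>R \<sigma>s - \<rho>)" by (rule kernel_dom[OF ps pr])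
    then obtain lam where "psd (lam *\<^sub>R \<sigma>s - \<rho>)" by blast
    then have "RF F \<rho> \<le> ereal lam" by (intro RF_le[OF \<sigma>sF]) (simp add: loewner_le_def)
    then show False using R by simp
  qed
  then obtain x where x1: "\<sigma>s *v x = 0" and x2: "\<rho> *v x \<noteq> 0" by blast
  have "Re (qf \<rho> x) \<noteq> 0" using psd_qf_zero[OF pr] x2 by blast
  moreover have "Re (qf \<rho> x) \<ge> 0" using pr by (simp add: psd_qf)
  ultimately have "Re (qf \<rho> x) > 0" by linarith
  moreover have "\<forall>\<sigma>\<in>F. \<sigma> *v x = 0" using kerF[OF x1] by blast
  ultimately show ?thesis by blast
qed

lemma reach_kill:
  fixes F :: "(complex^'a^'a) set" and F' :: "(complex^'b^'b) set"
  assumes aff: "affine_free_set F" and aff': "affine_free_set F'"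
    and r: "\<rho> \<in> density_ops" and r2: "\<rho>'' \<in> density_ops" and R: "RF F \<rho> = \<infinity>"
  shows "reach F F' \<rho> \<rho>''"
proof -
  have dF: "F \<subseteq> density_ops" using aff by (simp add: affine_free_set_def)
  have dF': "F' \<subseteq> density_ops" and ne': "F' \<noteq> {}" using aff' by (auto simp: affine_free_set_def)
  obtain x where kx: "\<forall>\<sigma>\<in>F. \<sigma> *v x = 0" and qx: "Re (qf \<rho> x) > 0" using kill_vec[OF aff r R] by blast
  have pr: "psd \<rho>" using r by (simp add: dens)
  have pr2: "psd \<rho>''" and tr2: "trace \<rho>'' = 1" using r2 by (auto simp: dens)
  have x0: "x \<noteq> 0" using qx by (auto simp: qf_def)
  define nx where "nx = Re (cinner x x)"
  have nx0: "nx > 0" using x0 by (simp add: nx_def cinner_self_Re)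
  define A where "A = (1 / nx) *\<^sub>R outer x"
  have pA: "psd A" unfolding A_def using nx0 by (intro psd_scaleR psd_outer) simp
  have trA: "Re (trace A) = 1" using nx0 by (simp add: A_def trace_scaleR' trace_outer nx_def)
  have tAX: "trace (A ** X) = of_real (1 / nx) * cinner x (X *v x)" for X
    by (simp add: A_def tmm_scaleR_left tmm_outer)
  define E where "E X = cscale (trace (A ** X)) \<rho>''" for X :: "complex^'a^'a"
  have cp: "completely_positive E" unfolding E_def by (rule cp_mp[OF pA pr2])
  have tn: "Re (trace (E X)) \<le> Re (trace X)" if pX: "psd X" for X
  proof -
    have "Re (trace (E X)) = Re (trace (A ** X))" by (simp add: E_def trace_cscale tr2)
    also have "\<dots> \<le> Re (trace A) * Re (trace X)" by (rule tmm_psd(3)[OF pA pX])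
    finally show ?thesis by (simp add: trA)
  qed
  obtain \<sigma>0 where s0: "\<sigma>0 \<in> F'" using ne' by blast
  have fr: "\<exists>\<sigma>'\<in>F'. \<exists>p. p \<ge> 0 \<and> E \<sigma> = p *\<^sub>R \<sigma>'" if s: "\<sigma> \<in> F" for \<sigma>
  proof -
    have "\<sigma> *v x = 0" using kx s by blast
    then have "trace (A ** \<sigma>) = 0" by (simp add: tAX)
    then have "E \<sigma> = 0 *\<^sub>R \<sigma>0" by (simp add: E_def cscale_def vec_eq_iff)
    then show ?thesis using s0 by blast
  qed
  have Efree: "E \<in> free_ops F F'" by (rule free_ops_intro[OF cp tn fr dF dF'])
  have qr: "qf \<rho> x = of_real (Re (qf \<rho> x))" by (rule real_of[OF qf_real[OF psd_herm[OF pr]]])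
  have "E \<rho> = cscale (of_real (1 / nx * Re (qf \<rho> x))) \<rho>''"
    using qr by (simp add: E_def tAX qf_def)
  also have "\<dots> = (1 / nx * Re (qf \<rho> x)) *\<^sub>R \<rho>''" by (rule cscale_of_real)
  finally have Er: "E \<rho> = (1 / nx * Re (qf \<rho> x)) *\<^sub>R \<rho>''" .
  show ?thesis by (rule reach_intro[OF Efree Er _ r2]) (use nx0 qx in simp)
qed



lemma Omega_ge1:
  assumes dF: "F \<subseteq> density_ops" and r: "\<rho> \<in> density_ops"
  shows "OmegaF F \<rho> \<ge> 1"
  unfolding OmegaF_def
proof (rule INF_greatest)
  fix \<sigma> assume s: "\<sigma> \<in> F"
  have sd: "\<sigma> \<in> density_ops" using s dF by blast
  have g1: "Rmax \<rho> \<sigma> \<ge> 1" and g2: "Rmax \<sigma> \<rho> \<ge> 1" using Rmax_ge1 r sd by auto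
  have z: "(0::ereal) \<le> 1" by simp
  have "(1::ereal) * 1 \<le> Rmax \<rho> \<sigma> * Rmax \<sigma> \<rho>"
    by (rule ereal_mult_mono[OF order.trans[OF z g1] z g1 g2])
  then show "1 \<le> Rmax \<rho> \<sigma> * Rmax \<sigma> \<rho>" by simp
qed

lemma dens_norm: "\<sigma> \<in> density_ops \<Longrightarrow> norm (\<sigma>::complex^'n^'n) \<le> real CARD('n)^2"
  using psd_norm_bound[of \<sigma>] by (simp add: dens)

lemma mix_dens:
  assumes "\<rho> \<in> density_ops" "\<sigma> \<in> density_ops" "0 \<le> e" "e \<le> 1"
  shows "(1 - e) *\<^sub>R \<rho> + e *\<^sub>R \<sigma> \<in> density_ops"
  using assms unfolding density_ops_def by (auto intro!: psd_add psd_scaleR simp: trace_add' trace_scaleR')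

lemma coef_eq: "a1 = a2 \<Longrightarrow> b1 = b2 \<Longrightarrow> a1 *\<^sub>R X + b1 *\<^sub>R Y = a2 *\<^sub>R X + b2 *\<^sub>R (Y::complex^'n^'n)"
  by simp

lemma mix_witness:
  assumes l1: "loewner_le \<rho>' (l *\<^sub>R \<sigma>')" and l2: "loewner_le \<sigma>' (m *\<^sub>R \<rho>')"
    and e0: "0 < e" and e1: "e < 1" and m1: "m \<ge> 1"
  shows "loewner_le ((1 - e) *\<^sub>R \<rho>' + e *\<^sub>R \<sigma>') (((1 - e) * l + e) *\<^sub>R \<sigma>')"
    and "loewner_le \<sigma>' ((m / (1 - e + e * m)) *\<^sub>R ((1 - e) *\<^sub>R \<rho>' + e *\<^sub>R (\<sigma>'::complex^'n^'n)))"
proof -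
  have "((1 - e) * l + e) *\<^sub>R \<sigma>' - ((1 - e) *\<^sub>R \<rho>' + e *\<^sub>R \<sigma>') = (1 - e) *\<^sub>R (l *\<^sub>R \<sigma>' - \<rho>')"
    by (simp add: algebra_simps)
  then show "loewner_le ((1 - e) *\<^sub>R \<rho>' + e *\<^sub>R \<sigma>') (((1 - e) * l + e) *\<^sub>R \<sigma>')"
    using l1 e1 unfolding loewner_le_def by (simp add: psd_scaleR)
  define D where "D = 1 - e + e * m"
  have D0: "D > 0"
  proof -
    have "e * m \<ge> 0" using e0 m1 by simp
    then show ?thesis using e1 by (simp add: D_def)
  qed
  have A: "(m / D) *\<^sub>R ((1 - e) *\<^sub>R \<rho>' + e *\<^sub>R \<sigma>') = (m / D * (1 - e)) *\<^sub>R \<rho>' + (m / D * e) *\<^sub>R \<sigma>'"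
    by (simp only: scaleR_add_right scaleR_scaleR)
  have B: "(m / D * e) *\<^sub>R \<sigma>' - \<sigma>' = (m / D * e - 1) *\<^sub>R \<sigma>'" by (simp add: scaleR_diff_left)
  have "(m / D) *\<^sub>R ((1 - e) *\<^sub>R \<rho>' + e *\<^sub>R \<sigma>') - \<sigma>' = (m / D * (1 - e)) *\<^sub>R \<rho>' + (m / D * e - 1) *\<^sub>R \<sigma>'"
    by (simp only: A add_diff_eq[symmetric] B)
  also have "\<dots> = ((1 - e) / D * m) *\<^sub>R \<rho>' + (- ((1 - e) / D)) *\<^sub>R \<sigma>'"
  proof (rule coef_eq)
    show "m / D * (1 - e) = (1 - e) / D * m" by simp
    show "m / D * e - 1 = - ((1 - e) / D)" using D0 by (simp add: field_simps D_def)
  qed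
  also have "\<dots> = ((1 - e) / D) *\<^sub>R (m *\<^sub>R \<rho>' - \<sigma>')"
    by (simp add: scaleR_diff_right scaleR_scaleR)
  finally have eq: "(m / D) *\<^sub>R ((1 - e) *\<^sub>R \<rho>' + e *\<^sub>R \<sigma>') - \<sigma>' = ((1 - e) / D) *\<^sub>R (m *\<^sub>R \<rho>' - \<sigma>')" .
  show "loewner_le \<sigma>' ((m / (1 - e + e * m)) *\<^sub>R ((1 - e) *\<^sub>R \<rho>' + e *\<^sub>R \<sigma>'))"
    unfolding loewner_le_def D_def[symmetric] eq using l2 e1 D0 unfolding loewner_le_def
    by (intro psd_scaleR) auto
qed

lemma prod_bound:
  fixes l m e :: real
  assumes l1: "l \<ge> 1" and m1: "m \<ge> 1" and e0: "0 < e" and e1: "e < 1"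
  shows "((1 - e) * l + e) * (m / (1 - e + e * m)) \<le> (1 - e) * (l * m) + e"
proof -
  define D where "D = 1 - e + e * m"
  have D0: "D > 0"
  proof -
    have "e * m \<ge> 0" using e0 m1 by simp
    then show ?thesis using e1 by (simp add: D_def)
  qed
  have key: "((1 - e) * (l * m) + e) * D - ((1 - e) * l + e) * m = e * (1 - e) * (m - 1) * (l * m - 1)"
    by (simp add: D_def algebra_simps)
  have "l * m \<ge> 1 * 1" using l1 m1 by (intro mult_mono) auto
  then have "e * (1 - e) * (m - 1) * (l * m - 1) \<ge> 0" using e0 e1 m1 by simp
  then have "((1 - e) * l + e) * m \<le> ((1 - e) * (l * m) + e) * D" using key by simp
  then show ?thesis using D0 unfolding D_def[symmetric] by (simp add: field_simps)
qed

theorem theorem3: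
  fixes F :: "(complex^'a::finite^'a) set" and F' :: "(complex^'b::finite^'b) set"
    and \<rho> :: "complex^'a^'a" and \<rho>' :: "complex^'b^'b"
  assumes "affine_free_set F" and "affine_free_set F'"
    and "\<rho> \<in> density_ops" and "\<rho>' \<in> density_ops"
    and "(OmegaF F \<rho> < \<infinity> \<and> OmegaF F \<rho> \<ge> OmegaF F' \<rho>')
         \<or> (OmegaF F \<rho> = \<infinity> \<and> RF F' \<rho>' < \<infinity>)
         \<or> RF F \<rho> = \<infinity>"
  shows "prob_transformable F F' \<rho> \<rho>'"
proof -
  note aff = assms(1) and aff' = assms(2) and r = assms(3) and r' = assms(4)
  have dF: "F \<subseteq> density_ops" using aff by (simp add: affine_free_set_def)
  have dF': "F' \<subseteq> density_ops" using aff' by (simp add: affine_free_set_def)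
  have pr': "psd \<rho>'" and tr': "trace \<rho>' = 1" using r' by (auto simp: dens)
  define C2 where "C2 = real CARD('b)^2"
  have C20: "C2 \<ge> 0" by (simp add: C2_def)
  have nd: "norm \<sigma> \<le> C2" if "\<sigma> \<in> density_ops" for \<sigma> :: "complex^'b^'b"
    unfolding C2_def by (rule dens_norm[OF that])
  have nd2: "norm (\<sigma> - \<rho>') \<le> 2 * C2" if "\<sigma> \<in> density_ops" for \<sigma> :: "complex^'b^'b"
  proof -
    have "norm (\<sigma> - \<rho>') \<le> norm \<sigma> + norm \<rho>'" by (rule norm_triangle_ineq4)
    then show ?thesis using nd[OF that] nd[OF r'] by simp
  qed
  let ?R = "{x. reach F F' \<rho> x}"
  show ?thesis unfolding pt_iff
  proof (cases "RF F \<rho> = \<infinity>")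
    case True
    have "\<rho>' \<in> ?R" using reach_kill[OF aff aff' r r' True] by simp
    then show "\<rho>' \<in> closure ?R" using closure_subset by blast
  next
    case notiii: False
    show "\<rho>' \<in> closure ?R"
      unfolding closure_approachable
    proof (intro allI impI)
      fix e :: real assume e0: "e > 0"
      define \<epsilon> where "\<epsilon> = min (1/2) (e / (2 * C2 + 1))"
      have \<epsilon>0: "\<epsilon> > 0" using e0 C20 by (simp add: \<epsilon>_def)
      have \<epsilon>1: "\<epsilon> < 1" by (simp add: \<epsilon>_def)
      have \<epsilon>e: "\<epsilon> * (2 * C2) < e"
      proof -
        have "\<epsilon> * (2 * C2) \<le> e / (2 * C2 + 1) * (2 * C2)" using C20 by (intro mult_right_mono) (auto simp: \<epsilon>_def)
        also have "\<dots> < e" using e0 C20 by (simp add: field_simps)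
        finally show ?thesis .
      qed
      have close: "dist ((1 - \<epsilon>) *\<^sub>R \<rho>' + \<epsilon> *\<^sub>R \<sigma>) \<rho>' < e" if sd: "\<sigma> \<in> density_ops" for \<sigma>
      proof -
        have "(1 - \<epsilon>) *\<^sub>R \<rho>' + \<epsilon> *\<^sub>R \<sigma> - \<rho>' = \<epsilon> *\<^sub>R (\<sigma> - \<rho>')" by (simp add: algebra_simps)
        then have "dist ((1 - \<epsilon>) *\<^sub>R \<rho>' + \<epsilon> *\<^sub>R \<sigma>) \<rho>' = \<epsilon> * norm (\<sigma> - \<rho>')"
          using \<epsilon>0 by (simp add: dist_norm)
        also have "\<dots> \<le> \<epsilon> * (2 * C2)" using nd2[OF sd] \<epsilon>0 by (intro mult_left_mono) auto
        finally show ?thesis using \<epsilon>e by simp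
      qed
      show "\<exists>y\<in>?R. dist y \<rho>' < e"
      proof (cases "OmegaF F \<rho> = \<infinity>")
        case OmInf: True
        then have "RF F' \<rho>' < \<infinity>" using assms(5) notiii by auto
        then obtain \<sigma>' l where s': "\<sigma>' \<in> F'" and l1: "loewner_le \<rho>' (l *\<^sub>R \<sigma>')"
          using RF_witness by blast
        have sd: "\<sigma>' \<in> density_ops" using s' dF' by blast
        define \<rho>e where "\<rho>e = (1 - \<epsilon>) *\<^sub>R \<rho>' + \<epsilon> *\<^sub>R \<sigma>'"
        have red: "\<rho>e \<in> density_ops" unfolding \<rho>e_def using \<epsilon>0 \<epsilon>1 by (intro mix_dens r' sd) auto
        have w1: "loewner_le \<rho>e (((1 - \<epsilon>) * l + \<epsilon>) *\<^sub>R \<sigma>')"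
        proof -
          have "((1 - \<epsilon>) * l + \<epsilon>) *\<^sub>R \<sigma>' - \<rho>e = (1 - \<epsilon>) *\<^sub>R (l *\<^sub>R \<sigma>' - \<rho>')"
            by (simp add: \<rho>e_def algebra_simps)
          then show ?thesis using l1 \<epsilon>1 unfolding loewner_le_def by (simp add: psd_scaleR)
        qed
        have w2: "loewner_le \<sigma>' ((1 / \<epsilon>) *\<^sub>R \<rho>e)"
        proof -
          have "(1 / \<epsilon>) *\<^sub>R \<rho>e = ((1 / \<epsilon>) * (1 - \<epsilon>)) *\<^sub>R \<rho>' + ((1 / \<epsilon>) * \<epsilon>) *\<^sub>R \<sigma>'"
            by (simp only: \<rho>e_def scaleR_add_right scaleR_scaleR)
          also have "(1 / \<epsilon>) * \<epsilon> = 1" using \<epsilon>0 by simp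
          also have "(1 / \<epsilon>) * (1 - \<epsilon>) = (1 - \<epsilon>) / \<epsilon>" by simp
          finally have "(1 / \<epsilon>) *\<^sub>R \<rho>e = ((1 - \<epsilon>) / \<epsilon>) *\<^sub>R \<rho>' + \<sigma>'" by simp
          then have "(1 / \<epsilon>) *\<^sub>R \<rho>e - \<sigma>' = ((1 - \<epsilon>) / \<epsilon>) *\<^sub>R \<rho>'" by simp
          then show ?thesis using pr' \<epsilon>0 \<epsilon>1 unfolding loewner_le_def by (simp add: psd_scaleR)
        qed
        have "reach F F' \<rho> \<rho>e" by (rule reach_M[OF aff aff' r red s' w1 w2]) (simp add: OmInf)
        then show ?thesis using close[OF sd] unfolding \<rho>e_def by blast
      next
        case OmFin: False
        then have Omle: "OmegaF F' \<rho>' \<le> OmegaF F \<rho>" using assms(5) notiii by auto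
        have g1: "OmegaF F \<rho> \<ge> 1" by (rule Omega_ge1[OF dF r])
        obtain w where w: "OmegaF F \<rho> = ereal w"
          using OmFin g1 by (cases "OmegaF F \<rho>") auto
        have w1: "w \<ge> 1" using g1 w by simp
        show ?thesis
        proof (cases "w > 1")
          case True
          define \<eta> where "\<eta> = \<epsilon> * (w - 1) / 2"
          have \<eta>0: "\<eta> > 0" using \<epsilon>0 True by (simp add: \<eta>_def)
          have o1: "OmegaF F' \<rho>' \<le> ereal w" using Omle w by simp
          have o2: "ereal w < ereal (w + \<eta>)" using \<eta>0 by simp
          have "OmegaF F' \<rho>' < ereal (w + \<eta>)" using o1 o2 by (rule le_less_trans)
          then obtain \<sigma>' l m where s': "\<sigma>' \<in> F'" and l1: "loewner_le \<rho>' (l *\<^sub>R \<sigma>')"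
            and l2: "loewner_le \<sigma>' (m *\<^sub>R \<rho>')" and lm: "l * m < w + \<eta>"
            using Omega_witness[OF dF' r'] by blast
          have sd: "\<sigma>' \<in> density_ops" using s' dF' by blast
          have lg: "l \<ge> 1" using lam_ge1[OF r' sd] l1 by (simp add: loewner_le_def)
          have mg: "m \<ge> 1" using lam_ge1[OF sd r'] l2 by (simp add: loewner_le_def)
          define \<rho>e where "\<rho>e = (1 - \<epsilon>) *\<^sub>R \<rho>' + \<epsilon> *\<^sub>R \<sigma>'"
          have red: "\<rho>e \<in> density_ops" unfolding \<rho>e_def using \<epsilon>0 \<epsilon>1 by (intro mix_dens r' sd) auto
          note mw = mix_witness[OF l1 l2 \<epsilon>0 \<epsilon>1 mg]
          have pb: "((1 - \<epsilon>) * l + \<epsilon>) * (m / (1 - \<epsilon> + \<epsilon> * m)) < w"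
          proof -
            have "((1 - \<epsilon>) * l + \<epsilon>) * (m / (1 - \<epsilon> + \<epsilon> * m)) \<le> (1 - \<epsilon>) * (l * m) + \<epsilon>"
              by (rule prod_bound[OF lg mg \<epsilon>0 \<epsilon>1])
            also have "(1 - \<epsilon>) * (l * m) \<le> (1 - \<epsilon>) * (w + \<eta>)" using lm \<epsilon>1 by (intro mult_left_mono) auto
            then have "(1 - \<epsilon>) * (l * m) + \<epsilon> \<le> (1 - \<epsilon>) * (w + \<eta>) + \<epsilon>" by simp
            also have "(1 - \<epsilon>) * (w + \<eta>) + \<epsilon> = w - \<epsilon> * (w - 1) + (1 - \<epsilon>) * \<eta>" by (simp add: algebra_simps)
            also have "\<dots> < w"
            proof -
              have "(1 - \<epsilon>) * \<eta> \<le> \<eta>" using \<epsilon>0 \<eta>0 by (simp add: algebra_simps)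
              moreover have "\<eta> < \<epsilon> * (w - 1)" using \<epsilon>0 True by (simp add: \<eta>_def)
              ultimately show ?thesis by simp
            qed
            finally show ?thesis .
          qed
          have "reach F F' \<rho> \<rho>e"
            by (rule reach_M[OF aff aff' r red s' mw(1)[folded \<rho>e_def] mw(2)[folded \<rho>e_def]]) (use pb in \<open>simp add: w\<close>)
          then show ?thesis using close[OF sd] unfolding \<rho>e_def by blast
        next
          case False
          then have w1': "w = 1" using w1 by simp
          define \<delta> where "\<delta> = e / (2 * C2 + 1)"
          have \<delta>0: "\<delta> > 0" using e0 C20 by (simp add: \<delta>_def)
          have o1: "OmegaF F' \<rho>' \<le> ereal 1" using Omle w w1' by simp
          have o2: "ereal 1 < ereal (1 + \<delta>)" using \<delta>0 by simp
          have "OmegaF F' \<rho>' < ereal (1 + \<delta>)" using o1 o2 by (rule le_less_trans)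
          then obtain \<sigma>' l m where s': "\<sigma>' \<in> F'" and l1: "loewner_le \<rho>' (l *\<^sub>R \<sigma>')"
            and l2: "loewner_le \<sigma>' (m *\<^sub>R \<rho>')" and lm: "l * m < 1 + \<delta>"
            using Omega_witness[OF dF' r'] by blast
          have sd: "\<sigma>' \<in> density_ops" using s' dF' by blast
          have ps: "psd \<sigma>'" and ts: "trace \<sigma>' = 1" using sd by (auto simp: dens)
          have lg: "l \<ge> 1" using lam_ge1[OF r' sd] l1 by (simp add: loewner_le_def)
          have mg: "m \<ge> 1" using lam_ge1[OF sd r'] l2 by (simp add: loewner_le_def)
          have "l * 1 \<le> l * m" using lg mg by (intro mult_left_mono) auto
          then have ld: "l - 1 < \<delta>" using lm by simp
          define X where "X = l *\<^sub>R \<sigma>' - \<rho>'"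
          have pX: "psd X" using l1 by (simp add: X_def loewner_le_def)
          have trX: "Re (trace X) = l - 1" by (simp add: X_def trace_diff' trace_scaleR' ts tr')
          have nX: "norm X \<le> C2 * (l - 1)" using psd_norm_bound[OF pX] by (simp add: C2_def trX)
          have "\<sigma>' - \<rho>' = X - (l - 1) *\<^sub>R \<sigma>'" by (simp add: X_def algebra_simps)
          then have "norm (\<sigma>' - \<rho>') \<le> norm X + (l - 1) * norm \<sigma>'"
            using norm_triangle_ineq4[of X "(l - 1) *\<^sub>R \<sigma>'"] lg by simp
          also have "\<dots> \<le> C2 * (l - 1) + (l - 1) * C2" using nX nd[OF sd] lg by (intro add_mono mult_left_mono) auto
          also have "\<dots> = (2 * C2) * (l - 1)" by simp
          also have "\<dots> \<le> (2 * C2) * \<delta>" using ld C20 by (intro mult_left_mono) auto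
          also have "\<dots> < e" using e0 C20 by (simp add: \<delta>_def field_simps)
          finally have "dist \<sigma>' \<rho>' < e" by (simp add: dist_norm)
          moreover have "reach F F' \<rho> \<sigma>'" by (rule reach_free[OF dF dF' r s'])
          ultimately show ?thesis by blast
        qed
      qed
    qed
  qed
qed

end
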